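(* Let $n_1,n_2,n_3\ge2$, $b,\sigma>0$, $r\le\min\{n_1,n_2\}$, $r\le s\le rn_2n_3$, $1\le m\le n_1n_2n_3$, $\Omega\sim\mathrm{Bern}(\frac{m}{n_1n_2n_3})$, and $\mathcal{Y}_{ijk}=\mathcal{X}^*_{ijk}+\sigma\epsilon_{ijk}$ for $(i,j,k)\in\Omega$ with $\epsilon_{ijk}$ i.i.d. $N(0,1)$. Then there exist $C,\beta_c>0$ such that \[ \inf_{\widetilde{\mathcal{X}}}\sup_{\mathcal{X}^*\in\mathfrak{U}(r,b,s)}\frac{\mathbb{E}_{\Omega,\mathcal{Y}_\Omega}\|\widetilde{\mathcal{X}}-\mathcal{X}^*\|_F^2}{n_1n_2n_3}\ge C\min\left\{\Delta b^2,\ \beta_c^2\sigma^2\left(\frac{s+rn_1n_3}{m}\right)\right\}, \] where $\Delta=\min\{1,\frac{s}{n_2n_3}\}$ and the infimum is over all estimators.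
   Context: Tensor-tensor product $\diamond$: for $\mathcal{X}\in\mathbb{R}^{n_1\times n_2\times n_3}$ with frontal slices $\mathbf{X}^{(1)},\dots,\mathbf{X}^{(n_3)}$ and $\mathcal{Y}\in\mathbb{R}^{n_2\times n_4\times n_3}$, $\mathcal{X}\diamond\mathcal{Y}$ is obtained by multiplying the block-circulant matrix with $(p,q)$ block $\mathbf{X}^{((p-q)\bmod n_3+1)}$ by the vertical stack of the frontal slices of $\mathcal{Y}$ and folding back. $\Omega\sim\mathrm{Bern}(\gamma)$: each index included independently with probability $\gamma$. $\mathfrak{U}(r,b,s)=\{\mathcal{A}\diamond\mathcal{B}\in\mathbb{R}_+^{n_1\times n_2\times n_3}:\mathcal{A}\in\mathbb{R}_+^{n_1\times r\times n_3},0\le\mathcal{A}_{ijk}\le1,\ \mathcal{B}\in\mathbb{R}_+^{r\times n_2\times n_3},0\le\mathcal{B}_{ijk}\le b,\ \|\mathcal{B}\|_0\le s\}$, with $\|\cdot\|_0$ the number of nonzero entries. *)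

theory Defs
  imports "HOL-Probability.Probability"
begin

type_synonym idx = "nat \<times> nat \<times> nat"
type_synonym tensor = "idx \<Rightarrow> real"

definition tidx :: "nat \<Rightarrow> nat \<Rightarrow> nat \<Rightarrow> idx set" where
  "tidx n1 n2 n3 = {0..<n1} \<times> {0..<n2} \<times> {0..<n3}"

text \<open>Tensor-tensor product of A (n1 x r x n3) and B (r x n2 x n3), via the
 block-circulant matrix whose (p,q) block is the frontal slice (p-q) mod n3 (0-based).\<close>
definition tprod :: "nat \<Rightarrow> nat \<Rightarrow> tensor \<Rightarrow> tensor \<Rightarrow> tensor" where
  "tprod r n3 A B = (\<lambda>(i,j,k). \<Sum>l<r. \<Sum>q<n3. A (i, l, (k + n3 - q) mod n3) * B (l, j, q))"

definition tclass :: "nat \<Rightarrow> nat \<Rightarrow> nat \<Rightarrow> nat \<Rightarrow> real \<Rightarrow> nat \<Rightarrow> tensor set" where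
  "tclass n1 n2 n3 r b s = {X. \<exists>A B.
      (\<forall>t\<in>tidx n1 r n3. 0 \<le> A t \<and> A t \<le> 1) \<and>
      (\<forall>t\<in>tidx r n2 n3. 0 \<le> B t \<and> B t \<le> b) \<and>
      card {t\<in>tidx r n2 n3. B t \<noteq> 0} \<le> s \<and>
      (\<forall>t. X t = (if t \<in> tidx n1 n2 n3 then tprod r n3 A B t else 0))}"

text \<open>Observation of one entry: (is it in Omega, observed value (0 if unobserved)).\<close>
definition obs_space :: "(bool \<times> real) measure" where
  "obs_space = count_space UNIV \<Otimes>\<^sub>M borel"

definition entry_law :: "real \<Rightarrow> real \<Rightarrow> tensor \<Rightarrow> idx \<Rightarrow> (bool \<times> real) measure" where
  "entry_law \<gamma> \<sigma> X t = distr (measure_pmf (bernoulli_pmf \<gamma>) \<Otimes>\<^sub>M density lborel std_normal_density)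
      obs_space (\<lambda>(d, e). (d, if d then X t + \<sigma> * e else 0))"

definition obs_law :: "nat \<Rightarrow> nat \<Rightarrow> nat \<Rightarrow> real \<Rightarrow> real \<Rightarrow> tensor \<Rightarrow> (idx \<Rightarrow> bool \<times> real) measure" where
  "obs_law n1 n2 n3 \<gamma> \<sigma> X = PiM (tidx n1 n2 n3) (entry_law \<gamma> \<sigma> X)"

definition estimators :: "nat \<Rightarrow> nat \<Rightarrow> nat \<Rightarrow> ((idx \<Rightarrow> bool \<times> real) \<Rightarrow> tensor) set" where
  "estimators n1 n2 n3 = {E. \<forall>t\<in>tidx n1 n2 n3.
      (\<lambda>\<omega>. E \<omega> t) \<in> borel_measurable (PiM (tidx n1 n2 n3) (\<lambda>_. obs_space))}"

definition risk :: "nat \<Rightarrow> nat \<Rightarrow> nat \<Rightarrow> real \<Rightarrow> real \<Rightarrow> ((idx \<Rightarrow> bool \<times> real) \<Rightarrow> tensor) \<Rightarrow> tensor \<Rightarrow> ennreal" where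
  "risk n1 n2 n3 \<gamma> \<sigma> E X =
     (\<integral>\<^sup>+ \<omega>. ennreal (\<Sum>t\<in>tidx n1 n2 n3. (E \<omega> t - X t)\<^sup>2) \<partial>obs_law n1 n2 n3 \<gamma> \<sigma> X)"

end

theory Submission
  imports Defs
begin

definition el :: "real \<Rightarrow> real \<Rightarrow> real \<Rightarrow> (bool \<times> real) measure" where
  "el \<gamma> \<sigma> x = distr (measure_pmf (bernoulli_pmf \<gamma>) \<Otimes>\<^sub>M std_normal_distribution) obs_space
      (\<lambda>(d, e). (d, if d then x + \<sigma> * e else 0))"

lemma entry_law_el: "entry_law \<gamma> \<sigma> X t = el \<gamma> \<sigma> (X t)"
  unfolding entry_law_def el_def ..

lemma meas_T: "(\<lambda>(d, e). (d, if d then x + \<sigma> * e else 0)) \<in>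
   measurable (measure_pmf (bernoulli_pmf \<gamma>) \<Otimes>\<^sub>M std_normal_distribution) obs_space"
  unfolding obs_space_def by measurable

lemma sets_el[simp, measurable_cong]: "sets (el \<gamma> \<sigma> x) = sets obs_space"
  by (simp add: el_def)

lemma space_el: "space (el \<gamma> \<sigma> x) = space obs_space"
  by (rule sets_eq_imp_space_eq) simp

lemma prob_el: "prob_space (el \<gamma> \<sigma> x)"
  unfolding el_def
  apply (rule prob_space.prob_space_distr[OF _ meas_T])
  by (simp add: pair_prob_space.intro pair_sigma_finite.intro prob_space_imp_sigma_finite prob_space_measure_pmf prob_space_normal_density prob_space_pair)

lemma nn_integral_el:
  assumes f[measurable]: "f \<in> borel_measurable obs_space" and g: "0 \<le> \<gamma>" "\<gamma> \<le> 1"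
  shows "(\<integral>\<^sup>+z. f z \<partial>el \<gamma> \<sigma> x) =
     ennreal \<gamma> * (\<integral>\<^sup>+e. f (True, x + \<sigma> * e) \<partial>std_normal_distribution) + ennreal (1 - \<gamma>) * f (False, 0)"
proof -
  interpret N: prob_space std_normal_distribution using prob_space_normal_density[of 1 0] by simp
  interpret P: pair_sigma_finite "measure_pmf (bernoulli_pmf \<gamma>)" std_normal_distribution
    by (simp add: pair_sigma_finite.intro prob_space_imp_sigma_finite prob_space_measure_pmf prob_space_normal_density)
  have "(\<integral>\<^sup>+z. f z \<partial>el \<gamma> \<sigma> x) = (\<integral>\<^sup>+de. f ((\<lambda>(d, e). (d, if d then x + \<sigma> * e else 0)) de)
      \<partial>(measure_pmf (bernoulli_pmf \<gamma>) \<Otimes>\<^sub>M std_normal_distribution))"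
    unfolding el_def by (rule nn_integral_distr[OF meas_T]) simp
  also have "\<dots> = (\<integral>\<^sup>+d. (\<integral>\<^sup>+e. f (d, if d then x + \<sigma> * e else 0) \<partial>std_normal_distribution) \<partial>measure_pmf (bernoulli_pmf \<gamma>))"
  proof -
    have m: "(\<lambda>de. f ((\<lambda>(d, e). (d, if d then x + \<sigma> * e else 0)) de)) \<in> borel_measurable
        (measure_pmf (bernoulli_pmf \<gamma>) \<Otimes>\<^sub>M std_normal_distribution)"
      using measurable_comp[OF meas_T f] by (simp add: comp_def)
    show ?thesis
      by (subst sigma_finite_measure.nn_integral_fst[OF N.sigma_finite_measure_axioms m, symmetric]) (simp add: case_prod_beta)
  qed
  also have "\<dots> = (\<integral>\<^sup>+e. f (True, x + \<sigma> * e) \<partial>std_normal_distribution) * \<gamma> +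
        (\<integral>\<^sup>+e. f (False, 0) \<partial>std_normal_distribution) * (1 - \<gamma>)"
    using g by (subst nn_integral_bernoulli_pmf) auto
  also have "(\<integral>\<^sup>+e. f (False, 0) \<partial>std_normal_distribution) = f (False, 0)"
    using N.emeasure_space_1 by simp
  finally show ?thesis by (simp add: mult.commute)
qed

lemma std_shift_id: "std_normal_density e * exp (u * e - u\<^sup>2 / 2) = std_normal_density (e - u)"
proof -
  have "exp (- e\<^sup>2 / 2) * exp (u * e - u\<^sup>2 / 2) = exp (- (e - u)\<^sup>2 / 2)"
    by (simp add: exp_add[symmetric] power2_eq_square algebra_simps)
  then show ?thesis by (simp add: std_normal_density_def)
qed

lemma gauss_shift:
  fixes g :: "real \<Rightarrow> ennreal" assumes [measurable]: "g \<in> borel_measurable borel"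
  shows "(\<integral>\<^sup>+e. g e * ennreal (exp (u * e - u\<^sup>2 / 2)) \<partial>std_normal_distribution)
       = (\<integral>\<^sup>+e. g (e + u) \<partial>std_normal_distribution)"
proof -
  have "(\<integral>\<^sup>+e. g e * ennreal (exp (u * e - u\<^sup>2 / 2)) \<partial>std_normal_distribution)
     = (\<integral>\<^sup>+e. ennreal (std_normal_density e) * (g e * ennreal (exp (u * e - u\<^sup>2 / 2))) \<partial>lborel)"
    by (subst nn_integral_density) auto
  also have "\<dots> = (\<integral>\<^sup>+e. ennreal (std_normal_density (e - u)) * g e \<partial>lborel)"
    apply (rule nn_integral_cong)
    apply (subst std_shift_id[symmetric])
    by (simp add: ennreal_mult' mult_ac normal_density_nonneg)
  also have "\<dots> = (\<integral>\<^sup>+e. ennreal (std_normal_density (u + 1 * e - u)) * g (u + 1 * e) \<partial>lborel)"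
    by (subst nn_integral_real_affine[where c=1 and t=u]) auto
  also have "\<dots> = (\<integral>\<^sup>+e. g (e + u) \<partial>std_normal_distribution)"
    by (subst nn_integral_density) (auto simp: add.commute)
  finally show ?thesis .
qed

definition lrr :: "real \<Rightarrow> real \<Rightarrow> bool \<times> real \<Rightarrow> real" where
  "lrr \<sigma> x z = (if fst z then exp ((2 * x * snd z - x\<^sup>2) / (2 * \<sigma>\<^sup>2)) else 1)"

definition lr :: "real \<Rightarrow> real \<Rightarrow> bool \<times> real \<Rightarrow> ennreal" where
  "lr \<sigma> x z = ennreal (lrr \<sigma> x z)"

lemma lrr_pos: "lrr \<sigma> x z > 0" by (simp add: lrr_def)

lemma lrr_meas[measurable]: "lrr \<sigma> x \<in> borel_measurable obs_space"
  unfolding lrr_def obs_space_def by measurable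

lemma lr_meas[measurable]: "lr \<sigma> x \<in> borel_measurable obs_space"
  unfolding lr_def by measurable

lemma emb_meas[measurable]: "(\<lambda>e. (True, a + c * e)) \<in> borel \<rightarrow>\<^sub>M obs_space"
  unfolding obs_space_def by measurable

lemma el_density:
  assumes g: "0 \<le> \<gamma>" "\<gamma> \<le> 1" and s: "\<sigma> > 0"
  shows "el \<gamma> \<sigma> x = density (el \<gamma> \<sigma> 0) (lr \<sigma> x)"
proof (rule measure_eqI)
  show "sets (el \<gamma> \<sigma> x) = sets (density (el \<gamma> \<sigma> 0) (lr \<sigma> x))" by simp
  fix A assume "A \<in> sets (el \<gamma> \<sigma> x)"
  then have A[measurable]: "A \<in> sets obs_space" by simp
  define u where "u = x / \<sigma>"
  have ind_meas: "(\<lambda>e. indicator A (True, 0 + \<sigma> * e) :: ennreal) \<in> borel_measurable borel"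
    using measurable_comp[OF emb_meas[of 0 \<sigma>] borel_measurable_indicator[OF A]] by (simp add: comp_def)
  have "emeasure (density (el \<gamma> \<sigma> 0) (lr \<sigma> x)) A = (\<integral>\<^sup>+z. lr \<sigma> x z * indicator A z \<partial>el \<gamma> \<sigma> 0)"
    by (rule emeasure_density) auto
  also have "\<dots> = ennreal \<gamma> * (\<integral>\<^sup>+e. indicator A (True, 0 + \<sigma> * e) * ennreal (exp (u * e - u\<^sup>2 / 2)) \<partial>std_normal_distribution)
        + ennreal (1 - \<gamma>) * indicator A (False, 0)"
  proof -
    have "\<And>e. lr \<sigma> x (True, 0 + \<sigma> * e) = ennreal (exp (u * e - u\<^sup>2 / 2))"
      using s by (simp add: lr_def lrr_def u_def power2_eq_square field_simps)
    moreover have mm: "(\<lambda>z. lr \<sigma> x z * indicator A z) \<in> borel_measurable obs_space" by measurable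
    ultimately show ?thesis
      by (subst nn_integral_el[OF mm g]) (auto simp: lr_def lrr_def mult.commute)
  qed
  also have "\<dots> = ennreal \<gamma> * (\<integral>\<^sup>+e. indicator A (True, 0 + \<sigma> * (e + u)) \<partial>std_normal_distribution)
        + ennreal (1 - \<gamma>) * indicator A (False, 0)"
    by (subst gauss_shift[OF ind_meas]) simp
  also have "\<dots> = (\<integral>\<^sup>+z. indicator A z \<partial>el \<gamma> \<sigma> x)"
    using s by (subst nn_integral_el[OF _ g]) (auto simp: u_def distrib_left add.commute)
  also have "\<dots> = emeasure (el \<gamma> \<sigma> x) A"
    by (rule nn_integral_indicator) simp
  finally show "emeasure (el \<gamma> \<sigma> x) A = emeasure (density (el \<gamma> \<sigma> 0) (lr \<sigma> x)) A" ..
qed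

definition hl :: "real \<Rightarrow> real \<Rightarrow> real \<Rightarrow> bool \<times> real \<Rightarrow> real" where
  "hl \<sigma> x x' z = (if fst z then exp (((x + x') * snd z - (x\<^sup>2 + x'\<^sup>2) / 2) / (2 * \<sigma>\<^sup>2)) else 1)"

lemma hl_meas[measurable]: "hl \<sigma> x x' \<in> borel_measurable obs_space"
  unfolding hl_def obs_space_def by measurable

lemma hl_sq: "(hl \<sigma> x x' z)\<^sup>2 = lrr \<sigma> x z * lrr \<sigma> x' z"
  by (simp add: hl_def lrr_def power2_eq_square exp_add[symmetric] add_divide_distrib[symmetric] algebra_simps)

lemma hl_nonneg: "hl \<sigma> x x' z \<ge> 0" by (simp add: hl_def)

lemma hl_same: "hl \<sigma> x x z = lrr \<sigma> x z"
  by (simp add: hl_def lrr_def power2_eq_square algebra_simps)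

lemma hell_el:
  assumes g: "0 \<le> \<gamma>" "\<gamma> \<le> 1" and s: "\<sigma> > 0"
  shows "(\<integral>\<^sup>+z. ennreal (hl \<sigma> x x' z) \<partial>el \<gamma> \<sigma> 0) = ennreal (1 - \<gamma> + \<gamma> * exp (- (x - x')\<^sup>2 / (8 * \<sigma>\<^sup>2)))"
proof -
  interpret N: prob_space std_normal_distribution using prob_space_normal_density[of 1 0] by simp
  define u where "u = (x + x') / (2 * \<sigma>)"
  define c where "c = exp (- (x - x')\<^sup>2 / (8 * \<sigma>\<^sup>2))"
  have pt: "\<And>e. hl \<sigma> x x' (True, 0 + \<sigma> * e) = c * exp (u * e - u\<^sup>2 / 2)"
  proof -
    fix e
    have "((x + x') * (\<sigma> * e) - (x\<^sup>2 + x'\<^sup>2) / 2) / (2 * \<sigma>\<^sup>2) = - (x - x')\<^sup>2 / (8 * \<sigma>\<^sup>2) + (u * e - u\<^sup>2 / 2)"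
      using s by (simp add: u_def power2_eq_square field_simps)
    then show "hl \<sigma> x x' (True, 0 + \<sigma> * e) = c * exp (u * e - u\<^sup>2 / 2)"
      by (simp add: hl_def c_def exp_add[symmetric])
  qed
  have "(\<integral>\<^sup>+z. ennreal (hl \<sigma> x x' z) \<partial>el \<gamma> \<sigma> 0) =
     ennreal \<gamma> * (\<integral>\<^sup>+e. ennreal c * ennreal (exp (u * e - u\<^sup>2 / 2)) \<partial>std_normal_distribution) + ennreal (1 - \<gamma>) * 1"
  proof -
    have mm: "(\<lambda>z. ennreal (hl \<sigma> x x' z)) \<in> borel_measurable obs_space" by measurable
    have pt': "\<And>e. ennreal (hl \<sigma> x x' (True, 0 + \<sigma> * e)) = ennreal c * ennreal (exp (u * e - u\<^sup>2 / 2))"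
      by (subst pt) (simp add: ennreal_mult' c_def)
    show ?thesis
      apply (subst nn_integral_el[OF mm g])
      using pt' by (simp add: hl_def del: add_0)
  qed
  also have "(\<integral>\<^sup>+e. ennreal c * ennreal (exp (u * e - u\<^sup>2 / 2)) \<partial>std_normal_distribution) = ennreal c"
    by (subst gauss_shift) (auto simp: N.emeasure_space_1[simplified])
  finally show ?thesis
    using g by (simp add: c_def ennreal_mult'[symmetric] ennreal_plus[symmetric] del: ennreal_plus)
qed

definition pd :: "real \<Rightarrow> (idx \<Rightarrow> real) \<Rightarrow> idx set \<Rightarrow> (idx \<Rightarrow> bool \<times> real) \<Rightarrow> real" where
  "pd \<sigma> X I \<omega> = (\<Prod>t\<in>I. lrr \<sigma> (X t) (\<omega> t))"

lemma pd_pos: "pd \<sigma> X I \<omega> > 0"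
  unfolding pd_def by (rule prod_pos) (simp add: lrr_pos)

lemma pd_meas[measurable]: "finite I \<Longrightarrow> pd \<sigma> X I \<in> borel_measurable (PiM I (\<lambda>_. el \<gamma> \<sigma> 0))"
  unfolding pd_def by measurable

lemma indicator_PiE_prod:
  assumes "\<omega> \<in> extensional I" "finite I"
  shows "indicator (PiE I A) \<omega> = (\<Prod>t\<in>I. indicator (A t) (\<omega> t) :: ennreal)"
proof (cases "\<forall>t\<in>I. \<omega> t \<in> A t")
  case True
  then have "\<omega> \<in> PiE I A" using assms by (auto simp: PiE_def)
  then show ?thesis using True by (simp add: indicator_def)
next
  case False
  then obtain t where t: "t \<in> I" "\<omega> t \<notin> A t" by auto
  then have "\<omega> \<notin> PiE I A" by auto
  moreover have "(\<Prod>t\<in>I. indicator (A t) (\<omega> t) :: ennreal) = 0"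
    using t assms(2) by (intro prod_zero) (auto intro!: bexI[of _ t])
  ultimately show ?thesis by simp
qed

lemma obs_density:
  assumes g: "0 \<le> \<gamma>" "\<gamma> \<le> 1" and s: "\<sigma> > 0" and I: "finite I"
  shows "PiM I (\<lambda>t. el \<gamma> \<sigma> (X t)) = density (PiM I (\<lambda>_. el \<gamma> \<sigma> 0)) (\<lambda>\<omega>. ennreal (pd \<sigma> X I \<omega>))"
proof -
  interpret P: product_sigma_finite "\<lambda>t. el \<gamma> \<sigma> (X t)"
    unfolding product_sigma_finite_def using prob_el prob_space_imp_sigma_finite by blast
  interpret P0: product_sigma_finite "\<lambda>t. el \<gamma> \<sigma> 0"
    unfolding product_sigma_finite_def using prob_el prob_space_imp_sigma_finite by blast
  show ?thesis
  proof (rule P.PiM_eqI[OF I, symmetric])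
    show "sets (density (PiM I (\<lambda>_. el \<gamma> \<sigma> 0)) (\<lambda>\<omega>. ennreal (pd \<sigma> X I \<omega>))) = sets (PiM I (\<lambda>t. el \<gamma> \<sigma> (X t)))"
      by (simp cong: sets_PiM_cong)
    fix A assume A: "\<And>i. i \<in> I \<Longrightarrow> A i \<in> sets (el \<gamma> \<sigma> (X i))"
    have A': "\<And>i. i \<in> I \<Longrightarrow> A i \<in> sets (el \<gamma> \<sigma> 0)" using A by simp
    have "emeasure (density (PiM I (\<lambda>_. el \<gamma> \<sigma> 0)) (\<lambda>\<omega>. ennreal (pd \<sigma> X I \<omega>))) (PiE I A)
        = (\<integral>\<^sup>+\<omega>. ennreal (pd \<sigma> X I \<omega>) * indicator (PiE I A) \<omega> \<partial>PiM I (\<lambda>_. el \<gamma> \<sigma> 0))"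
      apply (rule emeasure_density)
      using I apply measurable
      using A' I by (simp add: sets_PiM_I_finite)
    also have "\<dots> = (\<integral>\<^sup>+\<omega>. (\<Prod>t\<in>I. lr \<sigma> (X t) (\<omega> t) * indicator (A t) (\<omega> t)) \<partial>PiM I (\<lambda>_. el \<gamma> \<sigma> 0))"
    proof (rule nn_integral_cong)
      fix \<omega> assume "\<omega> \<in> space (PiM I (\<lambda>_. el \<gamma> \<sigma> 0))"
      then have "\<omega> \<in> extensional I" by (simp add: space_PiM PiE_def)
      then show "ennreal (pd \<sigma> X I \<omega>) * indicator (PiE I A) \<omega> = (\<Prod>t\<in>I. lr \<sigma> (X t) (\<omega> t) * indicator (A t) (\<omega> t))"
        using I by (simp add: indicator_PiE_prod pd_def lr_def prod.distrib prod_ennreal[symmetric] lrr_pos less_imp_le)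
    qed
    also have "\<dots> = (\<Prod>t\<in>I. \<integral>\<^sup>+z. lr \<sigma> (X t) z * indicator (A t) z \<partial>el \<gamma> \<sigma> 0)"
      apply (rule P0.product_nn_integral_prod[OF I])
      using A' by measurable
    also have "\<dots> = (\<Prod>t\<in>I. emeasure (el \<gamma> \<sigma> (X t)) (A t))"
    proof (rule prod.cong[OF refl])
      fix t assume "t \<in> I"
      then show "(\<integral>\<^sup>+z. lr \<sigma> (X t) z * indicator (A t) z \<partial>el \<gamma> \<sigma> 0) = emeasure (el \<gamma> \<sigma> (X t)) (A t)"
        using A' by (subst el_density[OF g s]) (simp add: emeasure_density)
    qed
    finally show "emeasure (density (PiM I (\<lambda>_. el \<gamma> \<sigma> 0)) (\<lambda>\<omega>. ennreal (pd \<sigma> X I \<omega>))) (PiE I A)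
        = (\<Prod>t\<in>I. emeasure (el \<gamma> \<sigma> (X t)) (A t))" .
  qed
qed

definition rho :: "real \<Rightarrow> real \<Rightarrow> real \<Rightarrow> real \<Rightarrow> real" where
  "rho \<gamma> \<sigma> x x' = 1 - \<gamma> + \<gamma> * exp (- (x - x')\<^sup>2 / (8 * \<sigma>\<^sup>2))"

lemma rho_nonneg: "0 \<le> \<gamma> \<Longrightarrow> \<gamma> \<le> 1 \<Longrightarrow> rho \<gamma> \<sigma> x x' \<ge> 0"
  unfolding rho_def by (simp add: add_nonneg_nonneg)

lemma hell_prod:
  assumes g: "0 \<le> \<gamma>" "\<gamma> \<le> 1" and s: "\<sigma> > 0" and I: "finite I"
  shows "(\<integral>\<^sup>+\<omega>. ennreal (\<Prod>t\<in>I. hl \<sigma> (X t) (X' t) (\<omega> t)) \<partial>PiM I (\<lambda>_. el \<gamma> \<sigma> 0))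
     = ennreal (\<Prod>t\<in>I. rho \<gamma> \<sigma> (X t) (X' t))"
proof -
  interpret P0: product_sigma_finite "\<lambda>t. el \<gamma> \<sigma> 0"
    unfolding product_sigma_finite_def using prob_el prob_space_imp_sigma_finite by blast
  have "(\<integral>\<^sup>+\<omega>. ennreal (\<Prod>t\<in>I. hl \<sigma> (X t) (X' t) (\<omega> t)) \<partial>PiM I (\<lambda>_. el \<gamma> \<sigma> 0))
      = (\<integral>\<^sup>+\<omega>. (\<Prod>t\<in>I. ennreal (hl \<sigma> (X t) (X' t) (\<omega> t))) \<partial>PiM I (\<lambda>_. el \<gamma> \<sigma> 0))"
    by (simp add: prod_ennreal hl_nonneg)
  also have "\<dots> = (\<Prod>t\<in>I. \<integral>\<^sup>+z. ennreal (hl \<sigma> (X t) (X' t) z) \<partial>el \<gamma> \<sigma> 0)"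
    by (rule P0.product_nn_integral_prod[OF I]) measurable
  also have "\<dots> = (\<Prod>t\<in>I. ennreal (rho \<gamma> \<sigma> (X t) (X' t)))"
    by (rule prod.cong[OF refl]) (simp add: hell_el[OF g s] rho_def)
  also have "\<dots> = ennreal (\<Prod>t\<in>I. rho \<gamma> \<sigma> (X t) (X' t))"
    using rho_nonneg[OF g] by (simp add: prod_ennreal)
  finally show ?thesis .
qed

lemma pd_int1:
  assumes g: "0 \<le> \<gamma>" "\<gamma> \<le> 1" and s: "\<sigma> > 0" and I: "finite I"
  shows "(\<integral>\<^sup>+\<omega>. ennreal (pd \<sigma> X I \<omega>) \<partial>PiM I (\<lambda>_. el \<gamma> \<sigma> 0)) = 1"
proof -
  interpret P: prob_space "PiM I (\<lambda>t. el \<gamma> \<sigma> (X t))"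
    by (rule prob_space_PiM) (simp add: prob_el)
  have "1 = emeasure (PiM I (\<lambda>t. el \<gamma> \<sigma> (X t))) (space (PiM I (\<lambda>_. el \<gamma> \<sigma> 0)))"
    using P.emeasure_space_1 by (simp add: space_PiM space_el)
  also have "\<dots> = (\<integral>\<^sup>+\<omega>. ennreal (pd \<sigma> X I \<omega>) \<partial>PiM I (\<lambda>_. el \<gamma> \<sigma> 0))"
    apply (subst obs_density[OF g s I])
    apply (subst emeasure_density)
    using I apply measurable
    done
  finally show ?thesis ..
qed

lemma amgm_aux:
  fixes p q h \<epsilon> D G H :: real
  assumes "p \<ge> 0" "q \<ge> 0" "h \<ge> 0" "h\<^sup>2 = p * q" "\<epsilon> \<ge> 0" "G \<ge> 0" "H \<ge> 0" "D \<ge> 0" "G + H \<ge> D / 2"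
  shows "D * \<epsilon> * h \<le> p * G + q * H + (D / 2 * \<epsilon>\<^sup>2) * p + (D / 2 * \<epsilon>\<^sup>2) * q"
proof -
  have hh: "h = sqrt p * sqrt q" using assms
    by (metis real_sqrt_mult real_sqrt_unique)
  have am: "2 * \<epsilon> * h \<le> min p q + \<epsilon>\<^sup>2 * (p + q)"
  proof -
    have a: "2 * \<epsilon> * (sqrt p * sqrt q) \<le> p + \<epsilon>\<^sup>2 * q"
    proof -
      have "0 \<le> (sqrt p - \<epsilon> * sqrt q)\<^sup>2" by simp
      then show ?thesis using assms by (simp add: power2_eq_square algebra_simps)
    qed
    have b: "2 * \<epsilon> * (sqrt p * sqrt q) \<le> q + \<epsilon>\<^sup>2 * p"
    proof -
      have "0 \<le> (sqrt q - \<epsilon> * sqrt p)\<^sup>2" by simp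
      then show ?thesis using assms by (simp add: power2_eq_square algebra_simps)
    qed
    have "\<epsilon>\<^sup>2 * q \<ge> 0" "\<epsilon>\<^sup>2 * p \<ge> 0" using assms by auto
    then show ?thesis using a b hh by (auto simp: min_def algebra_simps)
  qed
  have mn: "min p q * (D / 2) \<le> p * G + q * H"
  proof -
    have "min p q * (D / 2) \<le> min p q * (G + H)" using assms by (intro mult_left_mono) auto
    also have "\<dots> \<le> p * G + q * H" using assms
      by (simp add: distrib_left add_mono mult_right_mono)
    finally show ?thesis .
  qed
  have "D * \<epsilon> * h = (D / 2) * (2 * \<epsilon> * h)" by simp
  also have "\<dots> \<le> (D / 2) * (min p q + \<epsilon>\<^sup>2 * (p + q))" using am assms by (intro mult_left_mono) auto
  finally show ?thesis using mn by (simp add: algebra_simps)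
qed

lemma two_point:
  fixes X X' :: tensor and I S :: "idx set"
  assumes g: "0 \<le> \<gamma>" "\<gamma> \<le> 1" and s: "\<sigma> > 0" and I: "finite I" and S: "S \<subseteq> I"
    and Em[measurable]: "\<And>t. t \<in> S \<Longrightarrow> (\<lambda>\<omega>. E \<omega> t) \<in> borel_measurable (PiM I (\<lambda>_. el \<gamma> \<sigma> 0))"
  shows "ennreal ((\<Sum>t\<in>S. (X t - X' t)\<^sup>2) * (\<Prod>t\<in>I. rho \<gamma> \<sigma> (X t) (X' t))\<^sup>2 / 4) \<le>
     (\<integral>\<^sup>+\<omega>. ennreal (\<Sum>t\<in>S. (E \<omega> t - X t)\<^sup>2) \<partial>PiM I (\<lambda>t. el \<gamma> \<sigma> (X t))) +
     (\<integral>\<^sup>+\<omega>. ennreal (\<Sum>t\<in>S. (E \<omega> t - X' t)\<^sup>2) \<partial>PiM I (\<lambda>t. el \<gamma> \<sigma> (X' t)))"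
proof -
  define \<nu> where "\<nu> = PiM I (\<lambda>_. el \<gamma> \<sigma> 0)"
  define p where "p = pd \<sigma> X I"
  define q where "q = pd \<sigma> X' I"
  define h where "h = (\<lambda>\<omega>. \<Prod>t\<in>I. hl \<sigma> (X t) (X' t) (\<omega> t))"
  define D where "D = (\<Sum>t\<in>S. (X t - X' t)\<^sup>2)"
  define A where "A = (\<Prod>t\<in>I. rho \<gamma> \<sigma> (X t) (X' t))"
  define G where "G = (\<lambda>\<omega>. \<Sum>t\<in>S. (E \<omega> t - X t)\<^sup>2)"
  define H where "H = (\<lambda>\<omega>. \<Sum>t\<in>S. (E \<omega> t - X' t)\<^sup>2)"
  define \<epsilon> where "\<epsilon> = A / 2"
  define c where "c = D / 2 * \<epsilon>\<^sup>2"
  have A0: "A \<ge> 0" unfolding A_def using rho_nonneg[OF g] by (simp add: prod_nonneg)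
  have D0: "D \<ge> 0" unfolding D_def by (simp add: sum_nonneg)
  have [measurable]: "p \<in> borel_measurable \<nu>" "q \<in> borel_measurable \<nu>"
    unfolding p_def q_def \<nu>_def by (rule pd_meas[OF I])+
  have [measurable]: "h \<in> borel_measurable \<nu>"
    "G \<in> borel_measurable \<nu>" "H \<in> borel_measurable \<nu>"
    unfolding h_def G_def H_def \<nu>_def using I by measurable
  have L1: "(\<integral>\<^sup>+\<omega>. ennreal (G \<omega>) \<partial>PiM I (\<lambda>t. el \<gamma> \<sigma> (X t))) = (\<integral>\<^sup>+\<omega>. ennreal (p \<omega> * G \<omega>) \<partial>\<nu>)"
    unfolding \<nu>_def p_def
    by (subst obs_density[OF g s I], subst nn_integral_density)
       (auto intro!: nn_integral_cong pd_meas[OF I] simp: ennreal_mult'' G_def less_imp_le[OF pd_pos] sum_nonneg)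
  have L2: "(\<integral>\<^sup>+\<omega>. ennreal (H \<omega>) \<partial>PiM I (\<lambda>t. el \<gamma> \<sigma> (X' t))) = (\<integral>\<^sup>+\<omega>. ennreal (q \<omega> * H \<omega>) \<partial>\<nu>)"
    unfolding \<nu>_def q_def
    by (subst obs_density[OF g s I], subst nn_integral_density)
       (auto intro!: nn_integral_cong pd_meas[OF I] simp: ennreal_mult'' H_def less_imp_le[OF pd_pos] sum_nonneg)
  have pw: "ennreal (D * \<epsilon> * h \<omega>) \<le> ennreal (p \<omega> * G \<omega>) + ennreal (q \<omega> * H \<omega>) + ennreal c * ennreal (p \<omega>) + ennreal c * ennreal (q \<omega>)" for \<omega>
  proof -
    have hsq: "(h \<omega>)\<^sup>2 = p \<omega> * q \<omega>"
      unfolding h_def p_def q_def pd_def by (simp add: prod_power_distrib hl_sq prod.distrib)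
    have GH: "G \<omega> + H \<omega> \<ge> D / 2"
    proof -
      have "D / 2 = (\<Sum>t\<in>S. (X t - X' t)\<^sup>2 / 2)" unfolding D_def by (simp add: sum_divide_distrib)
      also have "\<dots> \<le> (\<Sum>t\<in>S. (E \<omega> t - X t)\<^sup>2 + (E \<omega> t - X' t)\<^sup>2)"
      proof (rule sum_mono)
        fix t
        have "(E \<omega> t - X t)\<^sup>2 + (E \<omega> t - X' t)\<^sup>2 - (X t - X' t)\<^sup>2 / 2 = (2 * E \<omega> t - X t - X' t)\<^sup>2 / 2"
          by (simp add: power2_eq_square field_simps)
        moreover have "0 \<le> (2 * E \<omega> t - X t - X' t)\<^sup>2 / 2" by simp
        ultimately show "(X t - X' t)\<^sup>2 / 2 \<le> (E \<omega> t - X t)\<^sup>2 + (E \<omega> t - X' t)\<^sup>2"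
          by linarith
      qed
      finally show ?thesis unfolding G_def H_def by (simp add: sum.distrib)
    qed
    have r: "D * \<epsilon> * h \<omega> \<le> p \<omega> * G \<omega> + q \<omega> * H \<omega> + c * p \<omega> + c * q \<omega>"
      unfolding c_def
      apply (rule amgm_aux)
      using pd_pos[of \<sigma> X I \<omega>] pd_pos[of \<sigma> X' I \<omega>] hsq GH D0 A0
      by (auto simp: p_def q_def h_def \<epsilon>_def G_def H_def prod_nonneg hl_nonneg sum_nonneg)
    have c0: "c \<ge> 0" unfolding c_def using D0 by simp
    have nn: "p \<omega> * G \<omega> \<ge> 0" "q \<omega> * H \<omega> \<ge> 0" "c * p \<omega> \<ge> 0" "c * q \<omega> \<ge> 0"
      using pd_pos[of \<sigma> X I \<omega>] pd_pos[of \<sigma> X' I \<omega>] c0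
      by (auto simp: p_def q_def G_def H_def sum_nonneg)
    show ?thesis using r nn
      by (simp add: ennreal_plus[symmetric] ennreal_mult[symmetric] c0 less_imp_le[OF pd_pos] p_def q_def
               del: ennreal_plus)
  qed
  have "(\<integral>\<^sup>+\<omega>. ennreal (D * \<epsilon> * h \<omega>) \<partial>\<nu>) \<le>
      (\<integral>\<^sup>+\<omega>. ennreal (p \<omega> * G \<omega>) + ennreal (q \<omega> * H \<omega>) + ennreal c * ennreal (p \<omega>) + ennreal c * ennreal (q \<omega>) \<partial>\<nu>)"
    by (rule nn_integral_mono) (rule pw)
  also have "\<dots> = (\<integral>\<^sup>+\<omega>. ennreal (p \<omega> * G \<omega>) \<partial>\<nu>) + (\<integral>\<^sup>+\<omega>. ennreal (q \<omega> * H \<omega>) \<partial>\<nu>)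
       + ennreal c * (\<integral>\<^sup>+\<omega>. ennreal (p \<omega>) \<partial>\<nu>) + ennreal c * (\<integral>\<^sup>+\<omega>. ennreal (q \<omega>) \<partial>\<nu>)"
    by (simp add: nn_integral_add nn_integral_cmult)
  also have "(\<integral>\<^sup>+\<omega>. ennreal (p \<omega>) \<partial>\<nu>) = 1" unfolding p_def \<nu>_def by (rule pd_int1[OF g s I])
  also have "(\<integral>\<^sup>+\<omega>. ennreal (q \<omega>) \<partial>\<nu>) = 1" unfolding q_def \<nu>_def by (rule pd_int1[OF g s I])
  finally have ineq0: "(\<integral>\<^sup>+\<omega>. ennreal (D * \<epsilon> * h \<omega>) \<partial>\<nu>) \<le>
      (\<integral>\<^sup>+\<omega>. ennreal (p \<omega> * G \<omega>) \<partial>\<nu>) + (\<integral>\<^sup>+\<omega>. ennreal (q \<omega> * H \<omega>) \<partial>\<nu>) + ennreal c * 1 + ennreal c * 1" .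
  have cc: "ennreal c + ennreal c = ennreal (2 * c)"
    using D0 by (simp add: c_def ennreal_plus[symmetric] del: ennreal_plus)
  have ineq: "(\<integral>\<^sup>+\<omega>. ennreal (D * \<epsilon> * h \<omega>) \<partial>\<nu>) \<le>
      (\<integral>\<^sup>+\<omega>. ennreal (p \<omega> * G \<omega>) \<partial>\<nu>) + (\<integral>\<^sup>+\<omega>. ennreal (q \<omega> * H \<omega>) \<partial>\<nu>) + ennreal (2 * c)"
    using ineq0 cc by (simp add: add.assoc)
  have "(\<integral>\<^sup>+\<omega>. ennreal (D * \<epsilon> * h \<omega>) \<partial>\<nu>) = ennreal (D * \<epsilon>) * (\<integral>\<^sup>+\<omega>. ennreal (h \<omega>) \<partial>\<nu>)"
  proof -
    have hnn: "\<And>\<omega>. h \<omega> \<ge> 0" unfolding h_def by (simp add: prod_nonneg hl_nonneg)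
    have "\<And>\<omega>. ennreal (D * \<epsilon> * h \<omega>) = ennreal (D * \<epsilon>) * ennreal (h \<omega>)"
      using D0 A0 hnn by (simp add: \<epsilon>_def ennreal_mult[symmetric])
    then show ?thesis by (simp add: nn_integral_cmult)
  qed
  also have "(\<integral>\<^sup>+\<omega>. ennreal (h \<omega>) \<partial>\<nu>) = ennreal A"
    unfolding h_def \<nu>_def A_def by (rule hell_prod[OF g s I])
  finally have lhs: "(\<integral>\<^sup>+\<omega>. ennreal (D * \<epsilon> * h \<omega>) \<partial>\<nu>) = ennreal (D * A\<^sup>2 / 2)"
    using D0 A0 by (simp add: ennreal_mult[symmetric] \<epsilon>_def power2_eq_square)
  define T where "T = (\<integral>\<^sup>+\<omega>. ennreal (p \<omega> * G \<omega>) \<partial>\<nu>) + (\<integral>\<^sup>+\<omega>. ennreal (q \<omega> * H \<omega>) \<partial>\<nu>)"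
  have "ennreal (D * A\<^sup>2 / 2) \<le> T + ennreal (D * A\<^sup>2 / 4)"
  proof -
    have "2 * c = D * A\<^sup>2 / 4" by (simp add: c_def \<epsilon>_def power2_eq_square)
    then show ?thesis using ineq lhs unfolding T_def by (simp only:)
  qed
  then have "ennreal (D * A\<^sup>2 / 4) \<le> T"
  proof (cases T)
    case (real t)
    assume t: "T = ennreal t" "0 \<le> t"
    assume "ennreal (D * A\<^sup>2 / 2) \<le> T + ennreal (D * A\<^sup>2 / 4)"
    then have "D * A\<^sup>2 / 2 \<le> t + D * A\<^sup>2 / 4" using t D0
      by (simp add: ennreal_plus[symmetric] del: ennreal_plus)
    then show ?thesis using t by (simp add: ennreal_le_iff)
  qed simp
  then have "ennreal (D * A\<^sup>2 / 4) \<le> (\<integral>\<^sup>+\<omega>. ennreal (G \<omega>) \<partial>PiM I (\<lambda>t. el \<gamma> \<sigma> (X t))) +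
     (\<integral>\<^sup>+\<omega>. ennreal (H \<omega>) \<partial>PiM I (\<lambda>t. el \<gamma> \<sigma> (X' t)))"
    unfolding L1 L2 T_def .
  then show ?thesis
    unfolding D_def A_def G_def H_def .
qed

definition Xv :: "idx set \<Rightarrow> (idx \<Rightarrow> 'a) \<Rightarrow> real \<Rightarrow> ('a \<Rightarrow> bool) \<Rightarrow> tensor" where
  "Xv U own \<delta> v = (\<lambda>t. if t \<in> U \<and> v (own t) then \<delta> else 0)"

lemma rho_same: "rho \<gamma> \<sigma> x x = 1" by (simp add: rho_def)

lemma rho_block_bound:
  assumes g: "0 \<le> \<gamma>" "\<gamma> \<le> 1" and s: "\<sigma> > 0" and L: "L \<ge> 1"
    and small: "\<gamma> * real L * \<delta>\<^sup>2 \<le> \<sigma>\<^sup>2"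
  shows "(1 - \<gamma> + \<gamma> * exp (- \<delta>\<^sup>2 / (8 * \<sigma>\<^sup>2))) ^ L \<ge> 7 / 8"
proof -
  define x where "x = - (\<gamma> * \<delta>\<^sup>2 / (8 * \<sigma>\<^sup>2))"
  have s2: "\<sigma>\<^sup>2 > 0" using s by simp
  have gd: "\<gamma> * \<delta>\<^sup>2 \<le> \<sigma>\<^sup>2"
  proof -
    have "\<gamma> * \<delta>\<^sup>2 \<le> \<gamma> * real L * \<delta>\<^sup>2" proof -
      have "1 * \<delta>\<^sup>2 \<le> real L * \<delta>\<^sup>2" using L by (intro mult_right_mono) auto
      then show ?thesis using g by (simp add: mult.assoc mult_left_mono)
    qed
    then show ?thesis using small by linarith
  qed
  have x1: "x \<ge> -1"
  proof -
    have "\<gamma> * \<delta>\<^sup>2 \<le> 8 * \<sigma>\<^sup>2" using gd s2 by linarith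
    then show ?thesis unfolding x_def using s2 by (simp add: field_simps)
  qed
  have "1 + x \<le> 1 - \<gamma> + \<gamma> * exp (- \<delta>\<^sup>2 / (8 * \<sigma>\<^sup>2))"
  proof -
    have "1 + (- \<delta>\<^sup>2 / (8 * \<sigma>\<^sup>2)) \<le> exp (- \<delta>\<^sup>2 / (8 * \<sigma>\<^sup>2))" by (rule exp_ge_add_one_self)
    then have "\<gamma> * (1 + (- \<delta>\<^sup>2 / (8 * \<sigma>\<^sup>2))) \<le> \<gamma> * exp (- \<delta>\<^sup>2 / (8 * \<sigma>\<^sup>2))" by (rule mult_left_mono[OF _ g(1)])
    then show ?thesis unfolding x_def by (simp add: algebra_simps)
  qed
  have "1 + real L * x \<le> (1 + x) ^ L" by (rule Bernoulli_inequality[OF x1])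
  also have "\<dots> \<le> (1 - \<gamma> + \<gamma> * exp (- \<delta>\<^sup>2 / (8 * \<sigma>\<^sup>2))) ^ L"
    using \<open>1 + x \<le> _\<close> x1 by (intro power_mono) auto
  finally have *: "1 + real L * x \<le> (1 - \<gamma> + \<gamma> * exp (- \<delta>\<^sup>2 / (8 * \<sigma>\<^sup>2))) ^ L" .
  have "real L * x = - (\<gamma> * real L * \<delta>\<^sup>2) / (8 * \<sigma>\<^sup>2)" unfolding x_def by (simp add: field_simps)
  also have "\<dots> \<ge> - 1 / 8" using small s2 by (simp add: field_simps)
  finally show ?thesis using * by linarith
qed

lemma ennreal_half_le:
  fixes M :: ennreal
  assumes "ennreal c \<le> 2 * M" "c \<ge> 0"
  shows "ennreal (c / 2) \<le> M"
proof (cases M)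
  case (real m)
  have "2 * ennreal m = ennreal (2 * m)" using real by (simp add: ennreal_mult)
  then have "c \<le> 2 * m" using assms real
    by (simp add: ennreal_le_iff)
  then show ?thesis using real by (simp add: ennreal_le_iff)
qed simp

lemma assouad:
  fixes U :: "idx set" and own :: "idx \<Rightarrow> 'a" and D :: "'a set" and I :: "idx set"
  assumes g: "0 \<le> \<gamma>" "\<gamma> \<le> 1" and s: "\<sigma> > 0" and I: "finite I" and U: "U \<subseteq> I"
    and D: "finite D" and own: "own ` U \<subseteq> D"
    and blk: "\<And>a. a \<in> D \<Longrightarrow> card {t\<in>U. own t = a} = L"
    and \<delta>: "\<delta> > 0" and small: "\<gamma> * real L * \<delta>\<^sup>2 \<le> \<sigma>\<^sup>2"
    and Em: "\<And>t. t \<in> I \<Longrightarrow> (\<lambda>\<omega>. E \<omega> t) \<in> borel_measurable (PiM I (\<lambda>_. obs_space))"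
  shows "\<exists>v. ennreal (real (card D) * real L * \<delta>\<^sup>2 / 16) \<le>
     (\<integral>\<^sup>+\<omega>. ennreal (\<Sum>t\<in>I. (E \<omega> t - Xv U own \<delta> v t)\<^sup>2) \<partial>PiM I (\<lambda>t. el \<gamma> \<sigma> (Xv U own \<delta> v t)))"
proof (cases "L = 0")
  case True
  then show ?thesis by simp
next
  case False
  then have L1: "L \<ge> 1" by simp
  define V where "V = PiE D (\<lambda>_. UNIV :: bool set)"
  define P where "P = (\<lambda>v. PiM I (\<lambda>t. el \<gamma> \<sigma> (Xv U own \<delta> v t)))"
  define R where "R = (\<lambda>v. \<integral>\<^sup>+\<omega>. ennreal (\<Sum>t\<in>I. (E \<omega> t - Xv U own \<delta> v t)\<^sup>2) \<partial>P v)"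
  define B where "B = (\<lambda>a. {t\<in>U. own t = a})"
  define T where "T = (\<lambda>a v. \<integral>\<^sup>+\<omega>. ennreal (\<Sum>t\<in>B a. (E \<omega> t - Xv U own \<delta> v t)\<^sup>2) \<partial>P v)"
  define fl where "fl = (\<lambda>a (v::'a \<Rightarrow> bool). v(a := \<not> v a))"
  have VF: "finite V" unfolding V_def using D by (simp add: finite_PiE)
  have VN: "V \<noteq> {}" unfolding V_def by (simp add: PiE_eq_empty_iff)
  have flV: "\<And>a v. a \<in> D \<Longrightarrow> v \<in> V \<Longrightarrow> fl a v \<in> V"
    unfolding V_def fl_def by (auto simp: PiE_def extensional_def)
  have flfl: "\<And>a v. fl a (fl a v) = v" unfolding fl_def by auto
  have BU: "\<And>a. B a \<subseteq> U" unfolding B_def by auto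
  have BI: "\<And>a. B a \<subseteq> I" using BU U by blast
  have setsP: "\<And>v. sets (P v) = sets (PiM I (\<lambda>_. obs_space))"
    unfolding P_def by (rule sets_PiM_cong) simp_all
  have sets0: "sets (PiM I (\<lambda>_. el \<gamma> \<sigma> 0)) = sets (PiM I (\<lambda>_. obs_space))"
    by (rule sets_PiM_cong) simp_all
  have Em0: "\<And>t. t \<in> I \<Longrightarrow> (\<lambda>\<omega>. E \<omega> t) \<in> borel_measurable (PiM I (\<lambda>_. el \<gamma> \<sigma> 0))"
    using Em measurable_cong_sets[OF sets0 refl] by blast
  have EmP: "\<And>t v. t \<in> I \<Longrightarrow> (\<lambda>\<omega>. E \<omega> t) \<in> borel_measurable (P v)"
    using Em measurable_cong_sets[OF setsP refl] by blast
  have step1: "(\<Sum>a\<in>D. T a v) \<le> R v" for v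
  proof -
    have "(\<Sum>a\<in>D. T a v) = (\<integral>\<^sup>+\<omega>. (\<Sum>a\<in>D. ennreal (\<Sum>t\<in>B a. (E \<omega> t - Xv U own \<delta> v t)\<^sup>2)) \<partial>P v)"
      unfolding T_def
      apply (rule nn_integral_sum[symmetric])
      apply (rule measurable_compose[of _ _ borel, OF _ measurable_ennreal])
      apply (rule borel_measurable_sum)
      apply (rule borel_measurable_power)
      apply (rule borel_measurable_diff)
      using EmP BI apply blast
      apply simp
      done
    also have "\<dots> \<le> R v"
      unfolding R_def
    proof (rule nn_integral_mono)
      fix \<omega>
      have "(\<Sum>a\<in>D. ennreal (\<Sum>t\<in>B a. (E \<omega> t - Xv U own \<delta> v t)\<^sup>2))
          = ennreal (\<Sum>a\<in>D. \<Sum>t\<in>B a. (E \<omega> t - Xv U own \<delta> v t)\<^sup>2)"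
        by (simp add: sum_nonneg)
      also have "(\<Sum>a\<in>D. \<Sum>t\<in>B a. (E \<omega> t - Xv U own \<delta> v t)\<^sup>2) = (\<Sum>t\<in>U. (E \<omega> t - Xv U own \<delta> v t)\<^sup>2)"
        unfolding B_def using sum.group[OF finite_subset[OF U I] D own] by simp
      also have "\<dots> \<le> (\<Sum>t\<in>I. (E \<omega> t - Xv U own \<delta> v t)\<^sup>2)"
        by (rule sum_mono2[OF I U]) simp
      finally show "(\<Sum>a\<in>D. ennreal (\<Sum>t\<in>B a. (E \<omega> t - Xv U own \<delta> v t)\<^sup>2))
          \<le> ennreal (\<Sum>t\<in>I. (E \<omega> t - Xv U own \<delta> v t)\<^sup>2)"
        by (simp add: ennreal_leI)
    qed
    finally show ?thesis .
  qed
  define \<rho>0 where "\<rho>0 = 1 - \<gamma> + \<gamma> * exp (- \<delta>\<^sup>2 / (8 * \<sigma>\<^sup>2))"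
  have step2: "ennreal (real L * \<delta>\<^sup>2 / 8) \<le> T a v + T a (fl a v)" if a: "a \<in> D" for a v
  proof -
    have cB: "card (B a) = L" using blk[OF a] by (simp add: B_def)
    have xin: "\<And>t. t \<in> B a \<Longrightarrow> Xv U own \<delta> v t = (if v a then \<delta> else 0) \<and> Xv U own \<delta> (fl a v) t = (if v a then 0 else \<delta>)"
      unfolding B_def Xv_def fl_def by auto
    have xout: "\<And>t. t \<in> I - B a \<Longrightarrow> Xv U own \<delta> (fl a v) t = Xv U own \<delta> v t"
      unfolding B_def Xv_def fl_def by auto
    have Dd: "(\<Sum>t\<in>B a. (Xv U own \<delta> v t - Xv U own \<delta> (fl a v) t)\<^sup>2) = real L * \<delta>\<^sup>2"
    proof -
      have "(\<Sum>t\<in>B a. (Xv U own \<delta> v t - Xv U own \<delta> (fl a v) t)\<^sup>2) = (\<Sum>t\<in>B a. \<delta>\<^sup>2)"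
        by (rule sum.cong[OF refl]) (auto dest: xin)
      then show ?thesis using cB by simp
    qed
    have Ad: "(\<Prod>t\<in>I. rho \<gamma> \<sigma> (Xv U own \<delta> v t) (Xv U own \<delta> (fl a v) t)) = \<rho>0 ^ L"
    proof -
      have "(\<Prod>t\<in>I. rho \<gamma> \<sigma> (Xv U own \<delta> v t) (Xv U own \<delta> (fl a v) t)) =
          (\<Prod>t\<in>I - B a. rho \<gamma> \<sigma> (Xv U own \<delta> v t) (Xv U own \<delta> (fl a v) t)) *
          (\<Prod>t\<in>B a. rho \<gamma> \<sigma> (Xv U own \<delta> v t) (Xv U own \<delta> (fl a v) t))"
        by (rule prod.subset_diff[OF BI I])
      also have "(\<Prod>t\<in>I - B a. rho \<gamma> \<sigma> (Xv U own \<delta> v t) (Xv U own \<delta> (fl a v) t)) = 1"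
        by (rule prod.neutral) (simp add: xout rho_same)
      also have "(\<Prod>t\<in>B a. rho \<gamma> \<sigma> (Xv U own \<delta> v t) (Xv U own \<delta> (fl a v) t)) = (\<Prod>t\<in>B a. \<rho>0)"
      proof (rule prod.cong[OF refl])
        fix t assume "t \<in> B a"
        from xin[OF this] show "rho \<gamma> \<sigma> (Xv U own \<delta> v t) (Xv U own \<delta> (fl a v) t) = \<rho>0"
          by (cases "v a") (simp_all add: rho_def \<rho>0_def)
      qed
      finally show ?thesis using cB by simp
    qed
    have A78: "\<rho>0 ^ L \<ge> 7 / 8" unfolding \<rho>0_def by (rule rho_block_bound[OF g s L1 small])
    have "real L * \<delta>\<^sup>2 / 8 \<le> real L * \<delta>\<^sup>2 * (\<rho>0 ^ L)\<^sup>2 / 4"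
    proof -
      have "(7/8)\<^sup>2 \<le> (\<rho>0 ^ L)\<^sup>2" using A78 by (intro power_mono) auto
      then have "1 / 2 \<le> (\<rho>0 ^ L)\<^sup>2" by (simp add: power2_eq_square)
      then have "real L * \<delta>\<^sup>2 * (1/2) \<le> real L * \<delta>\<^sup>2 * (\<rho>0 ^ L)\<^sup>2" by (intro mult_left_mono) auto
      then show ?thesis by simp
    qed
    then have "ennreal (real L * \<delta>\<^sup>2 / 8) \<le> ennreal ((\<Sum>t\<in>B a. (Xv U own \<delta> v t - Xv U own \<delta> (fl a v) t)\<^sup>2) *
        (\<Prod>t\<in>I. rho \<gamma> \<sigma> (Xv U own \<delta> v t) (Xv U own \<delta> (fl a v) t))\<^sup>2 / 4)"
      unfolding Dd Ad by (rule ennreal_leI)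
    also have "\<dots> \<le> T a v + T a (fl a v)"
      unfolding T_def P_def
      by (rule two_point[OF g s I BI]) (use Em0 BI in blast)
    finally show ?thesis .
  qed
  have step3: "of_nat (card V) * ennreal (real L * \<delta>\<^sup>2 / 8) \<le> 2 * (\<Sum>v\<in>V. T a v)" if a: "a \<in> D" for a
  proof -
    have sw: "(\<Sum>v\<in>V. T a (fl a v)) = (\<Sum>v\<in>V. T a v)"
      by (rule sum.reindex_bij_witness[of V "fl a" "fl a"]) (auto simp: flfl flV[OF a])
    have "of_nat (card V) * ennreal (real L * \<delta>\<^sup>2 / 8) = (\<Sum>v\<in>V. ennreal (real L * \<delta>\<^sup>2 / 8))" by simp
    also have "\<dots> \<le> (\<Sum>v\<in>V. T a v + T a (fl a v))" by (rule sum_mono) (rule step2[OF a])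
    also have "\<dots> = 2 * (\<Sum>v\<in>V. T a v)" by (simp add: sum.distrib sw mult_2)
    finally show ?thesis .
  qed
  define M where "M = Max (R ` V)"
  have MV: "M \<in> R ` V" unfolding M_def using VF VN by (intro Max_in) auto
  have RM: "\<And>v. v \<in> V \<Longrightarrow> R v \<le> M" unfolding M_def using VF by (intro Max_ge) auto
  have "of_nat (card V) * (of_nat (card D) * ennreal (real L * \<delta>\<^sup>2 / 8)) =
      (\<Sum>a\<in>D. of_nat (card V) * ennreal (real L * \<delta>\<^sup>2 / 8))"
    by (simp add: mult_ac)
  also have "\<dots> \<le> (\<Sum>a\<in>D. 2 * (\<Sum>v\<in>V. T a v))" by (rule sum_mono) (rule step3)
  also have "\<dots> = 2 * (\<Sum>v\<in>V. \<Sum>a\<in>D. T a v)" by (simp add: sum_distrib_left sum.swap[of _ D V])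
  also have "\<dots> \<le> 2 * (\<Sum>v\<in>V. R v)" by (intro mult_left_mono sum_mono step1) auto
  also have "\<dots> \<le> 2 * (of_nat (card V) * M)" by (intro mult_left_mono) (auto intro: sum_bounded_above RM)
  finally have "of_nat (card V) * (of_nat (card D) * ennreal (real L * \<delta>\<^sup>2 / 8)) \<le> of_nat (card V) * (2 * M)"
    by (simp add: mult_ac)
  then have "of_nat (card D) * ennreal (real L * \<delta>\<^sup>2 / 8) \<le> 2 * M"
    using VF VN by (subst (asm) ennreal_mult_le_mult_iff) auto
  moreover have "of_nat (card D) * ennreal (real L * \<delta>\<^sup>2 / 8) = ennreal (real (card D) * (real L * \<delta>\<^sup>2 / 8))"
    by (subst ennreal_mult) (simp_all add: ennreal_of_nat_eq_real_of_nat)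
  ultimately have "ennreal (real (card D) * (real L * \<delta>\<^sup>2 / 8)) \<le> 2 * M"
    by simp
  then have "ennreal (real (card D) * (real L * \<delta>\<^sup>2 / 8) / 2) \<le> M"
    by (rule ennreal_half_le) simp
  moreover obtain v where "M = R v" using MV by auto
  ultimately show ?thesis unfolding R_def P_def by (intro exI[of _ v]) (simp add: field_simps)
qed

lemma div_block_eq:
  fixes L l :: nat assumes "L \<ge> 1"
  shows "{j. j div L = l} = {l * L..<l * L + L}"
proof -
  have eq: "j div L = l \<longleftrightarrow> l * L \<le> j \<and> j < l * L + L" for j
  proof
    assume h: "j div L = l"
    have e: "l * L + j mod L = j" using h div_mult_mod_eq[of j L] by simp
    moreover have "j mod L < L" using assms by simp
    ultimately show "l * L \<le> j \<and> j < l * L + L" by linarith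
  next
    assume "l * L \<le> j \<and> j < l * L + L"
    then have "L * l \<le> j" "j < L * Suc l" by (simp_all add: mult_ac)
    then show "j div L = l" by (rule div_nat_eqI)
  qed
  show ?thesis unfolding set_eq_iff mem_Collect_eq atLeastLessThan_iff using eq by blast
qed

lemma sum_collapse2:
  fixes f :: "nat \<Rightarrow> nat \<Rightarrow> real"
  assumes "\<And>l q. l < r \<Longrightarrow> q < n \<Longrightarrow> \<not> (l = l0 \<and> q = q0) \<Longrightarrow> f l q = 0"
  shows "(\<Sum>l<r. \<Sum>q<n. f l q) = (if l0 < r \<and> q0 < n then f l0 q0 else 0)"
proof -
  have "(\<Sum>l<r. \<Sum>q<n. f l q) = (\<Sum>l<r. \<Sum>q<n. if l = l0 then (if q = q0 then f l0 q0 else 0) else 0)"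
    using assms by (intro sum.cong refl) auto
  also have "\<dots> = (if l0 < r \<and> q0 < n then f l0 q0 else 0)"
    by (simp add: sum.delta if_distrib[of "\<lambda>x. \<Sum>l<r. x"] cong: if_cong) (auto simp: sum.If_cases)
  finally show ?thesis .
qed

lemma mod_shift_zero:
  fixes k q n :: nat assumes "k < n" "q < n"
  shows "(k + n - q) mod n = 0 \<longleftrightarrow> q = k"
proof
  assume h: "(k + n - q) mod n = 0"
  have "k + n - q > 0" "k + n - q < 2 * n" using assms by auto
  moreover obtain c where c: "k + n - q = n * c" using h by (auto simp: mod_eq_0_iff_dvd dvd_def)
  ultimately have "c = 1"
  proof -
    assume a: "0 < k + n - q" "k + n - q < 2 * n"
    then have "c \<noteq> 0" using c by auto
    moreover have "c < 2" using a c by (metis mult.commute mult_less_cancel2)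
    ultimately show ?thesis by linarith
  qed
  with c have "k + n - q = n" by simp
  then show "q = k" using assms by auto
qed simp

lemma tidx_iff[simp]: "(i, j, k) \<in> tidx n1 n2 n3 \<longleftrightarrow> i < n1 \<and> j < n2 \<and> k < n3"
  by (simp add: tidx_def)

lemma finite_tidx[simp]: "finite (tidx n1 n2 n3)"
  by (simp add: tidx_def)

lemma R1_in_class:
  assumes k1: "1 \<le> k" "k \<le> r" "k \<le> n1" and D1: "D1 \<subseteq> tidx k n2 n3" "card D1 \<le> s"
    and \<delta>: "0 < \<delta>" "\<delta> \<le> b"
  defines "L1 \<equiv> n1 div k"
  defines "U1 \<equiv> {t \<in> tidx n1 n2 n3. fst t < k * L1 \<and> (fst t div L1, fst (snd t), snd (snd t)) \<in> D1}"
  defines "own1 \<equiv> \<lambda>t::idx. (fst t div L1, fst (snd t), snd (snd t))"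
  shows "Xv U1 own1 \<delta> v \<in> tclass n1 n2 n3 r b s"
proof -
  have L1: "L1 \<ge> 1" unfolding L1_def using k1 by (simp add: Suc_le_eq div_greater_zero_iff)
  define A :: tensor where "A = (\<lambda>(i, l, k'). if k' = 0 \<and> i < k * L1 \<and> l = i div L1 then 1 else 0)"
  define B :: tensor where "B = (\<lambda>(l, j, q). if (l, j, q) \<in> D1 \<and> v (l, j, q) then \<delta> else 0)"
  have Ab: "\<forall>t\<in>tidx n1 r n3. 0 \<le> A t \<and> A t \<le> 1" by (auto simp: A_def)
  have Bb: "\<forall>t\<in>tidx r n2 n3. 0 \<le> B t \<and> B t \<le> b" using \<delta> by (auto simp: B_def)
  have Bs: "card {t\<in>tidx r n2 n3. B t \<noteq> 0} \<le> s"
  proof -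
    have "{t\<in>tidx r n2 n3. B t \<noteq> 0} \<subseteq> D1" by (auto simp: B_def split: if_splits)
    moreover have "finite D1" using D1(1) by (rule finite_subset) simp
    ultimately show ?thesis using D1(2) by (meson card_mono le_trans)
  qed
  have X: "Xv U1 own1 \<delta> v t = (if t \<in> tidx n1 n2 n3 then tprod r n3 A B t else 0)" for t
  proof (cases t)
    case (fields i j k')
    show ?thesis
    proof (cases "t \<in> tidx n1 n2 n3")
      case False
      then show ?thesis by (simp add: Xv_def U1_def)
    next
      case True
      then have ijk: "i < n1" "j < n2" "k' < n3" using fields by auto
      have "tprod r n3 A B t = (\<Sum>l<r. \<Sum>q<n3. A (i, l, (k' + n3 - q) mod n3) * B (l, j, q))"
        by (simp add: tprod_def fields)
      also have "\<dots> = (if i div L1 < r \<and> k' < n3 then A (i, i div L1, (k' + n3 - k') mod n3) * B (i div L1, j, k') else 0)"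
      proof (rule sum_collapse2)
        fix l q assume lq: "l < r" "q < n3" "\<not> (l = i div L1 \<and> q = k')"
        show "A (i, l, (k' + n3 - q) mod n3) * B (l, j, q) = 0"
        proof (cases "(k' + n3 - q) mod n3 = 0")
          case True
          then have "q = k'" using mod_shift_zero[OF ijk(3) lq(2)] by simp
          then show ?thesis using lq True by (simp add: A_def)
        next
          case False
          then show ?thesis by (simp add: A_def)
        qed
      qed
      also have "\<dots> = (if i < k * L1 then B (i div L1, j, k') else 0)"
      proof -
        have "i < k * L1 \<Longrightarrow> i div L1 < r"
          using k1 L1 by (metis less_mult_imp_div_less mult.commute order_less_le_trans)
        then show ?thesis using ijk by (auto simp: A_def)
      qed
      also have "\<dots> = Xv U1 own1 \<delta> v t"
        using ijk by (auto simp: B_def Xv_def U1_def own1_def fields)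
      finally show ?thesis using True by simp
    qed
  qed
  show ?thesis unfolding tclass_def using Ab Bb Bs X by blast
qed

lemma R2_in_class:
  fixes n1 n2 n3 :: nat
  assumes g1: "1 \<le> g" "r * g \<le> n2" "r * g \<le> s" and \<delta>: "0 < \<delta>" "\<delta> \<le> b"
  defines "U2 \<equiv> {t \<in> tidx n1 n2 n3. fst (snd t) < r * g}"
  defines "own2 \<equiv> \<lambda>t::idx. (fst t, fst (snd t) div g, snd (snd t))"
  shows "Xv U2 own2 \<delta> v \<in> tclass n1 n2 n3 r b s"
proof -
  have b0: "b > 0" using \<delta> by simp
  define A :: tensor where "A = (\<lambda>(i, l, k'). if v (i, l, k') then \<delta> / b else 0)"
  define B :: tensor where "B = (\<lambda>(l, j, q). if q = 0 \<and> j < r * g \<and> l = j div g then b else 0)"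
  have Ab: "\<forall>t\<in>tidx n1 r n3. 0 \<le> A t \<and> A t \<le> 1" using \<delta> b0 by (auto simp: A_def)
  have Bb: "\<forall>t\<in>tidx r n2 n3. 0 \<le> B t \<and> B t \<le> b" using b0 by (auto simp: B_def)
  have Bs: "card {t\<in>tidx r n2 n3. B t \<noteq> 0} \<le> s"
  proof -
    have "{t\<in>tidx r n2 n3. B t \<noteq> 0} \<subseteq> (\<lambda>j. (j div g, j, 0)) ` {..<r * g}"
      by (auto simp: B_def split: if_splits)
    then have "card {t\<in>tidx r n2 n3. B t \<noteq> 0} \<le> card ((\<lambda>j. (j div g, j, 0::nat)) ` {..<r * g})"
      by (rule card_mono[rotated]) simp
    also have "\<dots> \<le> r * g" using card_image_le[of "{..<r * g}" "\<lambda>j. (j div g, j, 0::nat)"] by simp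
    finally show ?thesis using g1 by linarith
  qed
  have X: "Xv U2 own2 \<delta> v t = (if t \<in> tidx n1 n2 n3 then tprod r n3 A B t else 0)" for t
  proof (cases t)
    case (fields i j k')
    show ?thesis
    proof (cases "t \<in> tidx n1 n2 n3")
      case False
      then show ?thesis by (simp add: Xv_def U2_def)
    next
      case True
      then have ijk: "i < n1" "j < n2" "k' < n3" using fields by auto
      have "tprod r n3 A B t = (\<Sum>l<r. \<Sum>q<n3. A (i, l, (k' + n3 - q) mod n3) * B (l, j, q))"
        by (simp add: tprod_def fields)
      also have "\<dots> = (if j div g < r \<and> 0 < n3 then A (i, j div g, (k' + n3 - 0) mod n3) * B (j div g, j, 0) else 0)"
      proof (rule sum_collapse2)
        fix l q assume lq: "l < r" "q < n3" "\<not> (l = j div g \<and> q = 0)"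
        show "A (i, l, (k' + n3 - q) mod n3) * B (l, j, q) = 0"
          using lq by (auto simp: B_def)
      qed
      also have "\<dots> = (if j < r * g then A (i, j div g, k') * b else 0)"
      proof -
        have "j < r * g \<Longrightarrow> j div g < r" by (metis less_mult_imp_div_less)
        moreover have "(k' + n3 - 0) mod n3 = k'" using ijk by simp
        ultimately show ?thesis using ijk by (auto simp: B_def)
      qed
      also have "\<dots> = Xv U2 own2 \<delta> v t"
        using ijk b0 by (auto simp: A_def Xv_def U2_def own2_def fields)
      finally show ?thesis using True by simp
    qed
  qed
  show ?thesis unfolding tclass_def using Ab Bb Bs X by blast
qed

lemma R1_blocks:
  assumes k1: "1 \<le> k" "k \<le> n1" and D1: "D1 \<subseteq> tidx k n2 n3" and a: "a \<in> D1"
  defines "L1 \<equiv> n1 div k"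
  defines "U1 \<equiv> {t \<in> tidx n1 n2 n3. fst t < k * L1 \<and> (fst t div L1, fst (snd t), snd (snd t)) \<in> D1}"
  defines "own1 \<equiv> \<lambda>t::idx. (fst t div L1, fst (snd t), snd (snd t))"
  shows "card {t\<in>U1. own1 t = a} = L1"
proof -
  have L1: "L1 \<ge> 1" unfolding L1_def using k1 by (simp add: Suc_le_eq div_greater_zero_iff)
  obtain l j q where aa: "a = (l, j, q)" by (cases a) auto
  have lk: "l < k" "j < n2" "q < n3" using D1 a aa by auto
  have kL: "k * L1 \<le> n1" unfolding L1_def by (simp add: mult.commute)
  have "{t\<in>U1. own1 t = a} = (\<lambda>i. (i, j, q)) ` {l * L1..<l * L1 + L1}"
  proof (intro set_eqI iffI)
    fix t assume h: "t \<in> {t\<in>U1. own1 t = a}"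
    obtain i j' q' where tt: "t = (i, j', q')" by (cases t) auto
    from h have "own1 t = a" by simp
    then have "i div L1 = l" "j' = j" "q' = q" by (simp_all add: own1_def aa tt)
    then have t: "t = (i, j, q)" "i div L1 = l" using tt by simp_all
    then have "i \<in> {j. j div L1 = l}" by simp
    then have "i \<in> {l * L1..<l * L1 + L1}" using div_block_eq[OF L1, of l] by simp
    then show "t \<in> (\<lambda>i. (i, j, q)) ` {l * L1..<l * L1 + L1}" using t by auto
  next
    fix t assume "t \<in> (\<lambda>i. (i, j, q)) ` {l * L1..<l * L1 + L1}"
    then obtain i where t: "t = (i, j, q)" "l * L1 \<le> i" "i < l * L1 + L1" by auto
    then have "i \<in> {l * L1..<l * L1 + L1}" by simp
    then have "i \<in> {j. j div L1 = l}" using div_block_eq[OF L1, of l] by simp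
    then have idiv: "i div L1 = l" by simp
    have "l * L1 + L1 = Suc l * L1" by simp
    also have "\<dots> \<le> k * L1" using lk(1) by (intro mult_le_mono1) simp
    finally have "l * L1 + L1 \<le> k * L1" .
    then have "i < k * L1" using t by linarith
    then show "t \<in> {t\<in>U1. own1 t = a}" using t idiv kL lk a aa by (auto simp: U1_def own1_def)
  qed
  moreover have "card ((\<lambda>i. (i, j, q)) ` {l * L1..<l * L1 + L1}) = L1"
    by (subst card_image) (auto simp: inj_on_def)
  ultimately show ?thesis by simp
qed

lemma R2_blocks:
  fixes n1 n2 n3 :: nat
  assumes g1: "1 \<le> g" "r * g \<le> n2" and a: "a \<in> tidx n1 r n3"
  defines "U2 \<equiv> {t \<in> tidx n1 n2 n3. fst (snd t) < r * g}"
  defines "own2 \<equiv> \<lambda>t::idx. (fst t, fst (snd t) div g, snd (snd t))"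
  shows "card {t\<in>U2. own2 t = a} = g"
proof -
  obtain i l q where aa: "a = (i, l, q)" by (cases a) auto
  have lk: "i < n1" "l < r" "q < n3" using a aa by auto
  have "{t\<in>U2. own2 t = a} = (\<lambda>j. (i, j, q)) ` {l * g..<l * g + g}"
  proof (intro set_eqI iffI)
    fix t assume h: "t \<in> {t\<in>U2. own2 t = a}"
    obtain i' j q' where tt: "t = (i', j, q')" by (cases t) auto
    from h have "own2 t = a" by simp
    then have "i' = i" "j div g = l" "q' = q" by (simp_all add: own2_def aa tt)
    then have t: "t = (i, j, q)" "j div g = l" using tt by simp_all
    then have "j \<in> {j. j div g = l}" by simp
    then have "j \<in> {l * g..<l * g + g}" using div_block_eq[OF g1(1), of l] by simp
    then show "t \<in> (\<lambda>j. (i, j, q)) ` {l * g..<l * g + g}" using t by auto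
  next
    fix t assume "t \<in> (\<lambda>j. (i, j, q)) ` {l * g..<l * g + g}"
    then obtain j where t: "t = (i, j, q)" "l * g \<le> j" "j < l * g + g" by auto
    then have "j \<in> {l * g..<l * g + g}" by simp
    then have "j \<in> {j. j div g = l}" using div_block_eq[OF g1(1), of l] by simp
    then have jdiv: "j div g = l" by simp
    have "l * g + g = Suc l * g" by simp
    also have "\<dots> \<le> r * g" using lk(2) by (intro mult_le_mono1) simp
    finally have "l * g + g \<le> r * g" .
    then have "j < r * g" using t by linarith
    then show "t \<in> {t\<in>U2. own2 t = a}" using t jdiv lk g1 aa by (auto simp: U2_def own2_def)
  qed
  moreover have "card ((\<lambda>j. (i, j, q)) ` {l * g..<l * g + g}) = g"
    by (subst card_image) (auto simp: inj_on_def)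
  ultimately show ?thesis by simp
qed

lemma assouad_b:
  fixes U :: "idx set" and own :: "idx \<Rightarrow> 'a" and D :: "'a set" and I :: "idx set" and C :: "tensor set"
  assumes g: "0 < \<gamma>" "\<gamma> \<le> 1" and s: "\<sigma> > 0" and b: "b > 0" and I: "finite I" and U: "U \<subseteq> I"
    and D: "finite D" and own: "own ` U \<subseteq> D"
    and blk: "\<And>a. a \<in> D \<Longrightarrow> card {t\<in>U. own t = a} = L" and L: "L \<ge> 1"
    and Em: "\<And>t. t \<in> I \<Longrightarrow> (\<lambda>\<omega>. E \<omega> t) \<in> borel_measurable (PiM I (\<lambda>_. obs_space))"
    and C: "\<And>\<delta> v. 0 < \<delta> \<Longrightarrow> \<delta> \<le> b \<Longrightarrow> Xv U own \<delta> v \<in> C"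
  shows "\<exists>X\<in>C. ennreal (real (card D) * min (real L * b\<^sup>2) (\<sigma>\<^sup>2 / \<gamma>) / 16) \<le>
     (\<integral>\<^sup>+\<omega>. ennreal (\<Sum>t\<in>I. (E \<omega> t - X t)\<^sup>2) \<partial>PiM I (\<lambda>t. el \<gamma> \<sigma> (X t)))"
proof -
  define c where "c = \<sigma>\<^sup>2 / (\<gamma> * real L)"
  have c0: "c > 0" unfolding c_def using g s L by simp
  define \<delta> where "\<delta> = min b (sqrt c)"
  have \<delta>0: "\<delta> > 0" unfolding \<delta>_def using b c0 by simp
  have \<delta>b: "\<delta> \<le> b" unfolding \<delta>_def by simp
  have \<delta>2: "\<delta>\<^sup>2 = min (b\<^sup>2) c"
  proof (cases "b \<le> sqrt c")
    case True
    then have "b\<^sup>2 \<le> (sqrt c)\<^sup>2" using b by (intro power_mono) auto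
    then show ?thesis using True c0 by (simp add: \<delta>_def)
  next
    case False
    then have "(sqrt c)\<^sup>2 \<le> b\<^sup>2" using c0 by (intro power_mono) auto
    then show ?thesis using False c0 by (simp add: \<delta>_def min_def)
  qed
  have Ld: "real L * \<delta>\<^sup>2 = min (real L * b\<^sup>2) (\<sigma>\<^sup>2 / \<gamma>)"
  proof -
    have "real L * \<delta>\<^sup>2 = min (real L * b\<^sup>2) (real L * c)" unfolding \<delta>2 using L by (simp add: min_mult_distrib_left)
    also have "real L * c = \<sigma>\<^sup>2 / \<gamma>" unfolding c_def using L by simp
    finally show ?thesis .
  qed
  have small: "\<gamma> * real L * \<delta>\<^sup>2 \<le> \<sigma>\<^sup>2"
  proof -
    have "real L * \<delta>\<^sup>2 \<le> \<sigma>\<^sup>2 / \<gamma>" using Ld by simp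
    then have "\<gamma> * (real L * \<delta>\<^sup>2) \<le> \<gamma> * (\<sigma>\<^sup>2 / \<gamma>)" using g by (intro mult_left_mono) auto
    then show ?thesis using g by (simp add: mult.assoc)
  qed
  obtain v where v: "ennreal (real (card D) * real L * \<delta>\<^sup>2 / 16) \<le>
     (\<integral>\<^sup>+\<omega>. ennreal (\<Sum>t\<in>I. (E \<omega> t - Xv U own \<delta> v t)\<^sup>2) \<partial>PiM I (\<lambda>t. el \<gamma> \<sigma> (Xv U own \<delta> v t)))"
    using assouad[OF _ g(2) s I U D own blk \<delta>0 small Em] g by fastforce
  have eq: "real (card D) * real L * \<delta>\<^sup>2 / 16 = real (card D) * min (real L * b\<^sup>2) (\<sigma>\<^sup>2 / \<gamma>) / 16"
    using Ld by (simp add: mult.assoc)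
  show ?thesis
  proof (rule bexI[of _ "Xv U own \<delta> v"])
    show "Xv U own \<delta> v \<in> C" by (rule C[OF \<delta>0 \<delta>b])
    show "ennreal (real (card D) * min (real L * b\<^sup>2) (\<sigma>\<^sup>2 / \<gamma>) / 16) \<le>
     (\<integral>\<^sup>+\<omega>. ennreal (\<Sum>t\<in>I. (E \<omega> t - Xv U own \<delta> v t)\<^sup>2) \<partial>PiM I (\<lambda>t. el \<gamma> \<sigma> (Xv U own \<delta> v t)))"
      using v unfolding eq .
  qed
qed

lemma comb_ineq:
  fixes a sK PK x1 y1 x2 y2 :: real
  assumes "x1 \<ge> a / 2" "y1 \<ge> sK / 2" "x2 \<ge> a / 2" "y2 \<ge> PK / 2" "a \<ge> 0" "sK \<ge> 0" "PK \<ge> 0"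
  shows "min a (sK + PK) / 4 \<le> max (min x1 y1) (min x2 y2)"
  using assms by (auto simp: min_def max_def)

lemma card_tidx: "card (tidx a b c) = a * b * c"
  by (simp add: tidx_def card_cartesian_product)

lemma half_div_bound:
  fixes x k :: nat assumes "1 \<le> k" "k \<le> x"
  shows "x \<le> 2 * (k * (x div k))"
proof -
  have "x = k * (x div k) + x mod k" by simp
  moreover have "x mod k < k" using assms by simp
  moreover have "k \<le> k * (x div k)" using assms by (simp add: Suc_le_eq div_greater_zero_iff)
  ultimately show ?thesis by linarith
qed

lemma R1_params:
  fixes n1 n2 n3 r s :: nat
  assumes "n2 \<ge> 1" "n3 \<ge> 1" "1 \<le> r" "r \<le> n1" "r \<le> s" "s \<le> r * n2 * n3"
  shows "\<exists>k D1. 1 \<le> k \<and> k \<le> r \<and> k \<le> n1 \<and> D1 \<subseteq> tidx k n2 n3 \<and> card D1 \<le> s \<and> s \<le> 2 * card D1 \<and>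
     min (n1 * n2 * n3) (n1 * s) \<le> 2 * card D1 * (n1 div k)"
proof (cases "s \<le> n2 * n3")
  case True
  define D1 where "D1 = (\<lambda>p. (0::nat, p div n3, p mod n3)) ` {..<s}"
  have inj: "inj_on (\<lambda>p. (0::nat, p div n3, p mod n3)) {..<s}"
  proof (rule inj_onI)
    fix p p' assume "(0::nat, p div n3, p mod n3) = (0, p' div n3, p' mod n3)"
    then have "p div n3 = p' div n3" "p mod n3 = p' mod n3" by auto
    then show "p = p'" by (metis div_mult_mod_eq)
  qed
  have cD: "card D1 = s" unfolding D1_def using inj by (simp add: card_image)
  have sub: "D1 \<subseteq> tidx 1 n2 n3"
  proof
    fix t assume "t \<in> D1"
    then obtain p where p: "p < s" "t = (0, p div n3, p mod n3)" unfolding D1_def by auto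
    then have "p < n2 * n3" using True by linarith
    then have "p div n3 < n2" by (metis less_mult_imp_div_less)
    moreover have "p mod n3 < n3" using assms(2) by simp
    ultimately show "t \<in> tidx 1 n2 n3" using p by simp
  qed
  have "min (n1 * n2 * n3) (n1 * s) \<le> n1 * s" by simp
  also have "\<dots> \<le> 2 * (n1 * s)" by simp
  also have "\<dots> = 2 * card D1 * (n1 div 1)" using cD by (simp add: mult_ac)
  finally have "min (n1 * n2 * n3) (n1 * s) \<le> 2 * card D1 * (n1 div 1)" .
  then show ?thesis using sub cD assms by (intro exI[of _ 1] exI[of _ D1]) auto
next
  case False
  define k where "k = s div (n2 * n3)"
  define D1 where "D1 = tidx k n2 n3"
  have nn: "n2 * n3 \<ge> 1" using assms by simp
  have k1: "1 \<le> k" unfolding k_def using False nn by (simp add: Suc_le_eq div_greater_zero_iff)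
  have kr: "k \<le> r"
  proof -
    have "k \<le> (r * (n2 * n3)) div (n2 * n3)" unfolding k_def using assms(6) by (intro div_le_mono) (simp add: mult.assoc)
    then show ?thesis using nn by simp
  qed
  have cD: "card D1 = k * n2 * n3" unfolding D1_def by (rule card_tidx)
  have le_s: "k * n2 * n3 \<le> s" unfolding k_def using div_times_less_eq_dividend[of s "n2 * n3"] by (simp add: mult.assoc)
  have s2: "s \<le> 2 * (k * n2 * n3)"
    using half_div_bound[of "n2 * n3" s] nn False unfolding k_def by (simp add: mult_ac)
  have "n1 \<le> 2 * (k * (n1 div k))" using half_div_bound[of k n1] k1 kr assms(4) by simp
  then have "n1 * (n2 * n3) \<le> 2 * (k * (n1 div k)) * (n2 * n3)" by (rule mult_right_mono) simp
  then have "min (n1 * n2 * n3) (n1 * s) \<le> 2 * card D1 * (n1 div k)" unfolding cD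
    by (simp add: mult_ac min_le_iff_disj)
  then show ?thesis using k1 kr assms(4) cD le_s s2
    by (intro exI[of _ k] exI[of _ D1]) (auto simp: D1_def)
qed

lemma R2_params:
  fixes r n2 s :: nat
  assumes "1 \<le> r" "r \<le> n2" "r \<le> s"
  shows "1 \<le> min n2 s div r \<and> r * (min n2 s div r) \<le> n2 \<and> r * (min n2 s div r) \<le> s \<and> min n2 s \<le> 2 * (r * (min n2 s div r))"
proof -
  have m: "r \<le> min n2 s" using assms by simp
  have "1 \<le> min n2 s div r" using assms m by (simp add: Suc_le_eq div_greater_zero_iff)
  moreover have a: "r * (min n2 s div r) \<le> min n2 s" by (rule times_div_less_eq_dividend)
  then have "r * (min n2 s div r) \<le> n2 \<and> r * (min n2 s div r) \<le> s"
    by (simp only: min.bounded_iff)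
  moreover have "min n2 s \<le> 2 * (r * (min n2 s div r))" by (rule half_div_bound[OF assms(1) m])
  ultimately show ?thesis by blast
qed

lemma entry_law_fun: "entry_law \<gamma> \<sigma> X = (\<lambda>t. el \<gamma> \<sigma> (X t))"
  by (rule ext) (rule entry_law_el)

lemma risk_el: "risk n1 n2 n3 \<gamma> \<sigma> E X =
   (\<integral>\<^sup>+\<omega>. ennreal (\<Sum>t\<in>tidx n1 n2 n3. (E \<omega> t - X t)\<^sup>2) \<partial>PiM (tidx n1 n2 n3) (\<lambda>t. el \<gamma> \<sigma> (X t)))"
  unfolding risk_def obs_law_def entry_law_fun ..

lemma main_pos:
  fixes n1 n2 n3 r s m :: nat and b \<sigma> :: real
  assumes n: "n1 \<ge> 2" "n2 \<ge> 2" "n3 \<ge> 2" and b: "b > 0" and s: "\<sigma> > 0"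
    and r: "1 \<le> r" "r \<le> n1" "r \<le> n2" "r \<le> s" "s \<le> r * n2 * n3"
    and m: "1 \<le> m" "m \<le> n1 * n2 * n3" and E: "E \<in> estimators n1 n2 n3"
  shows "ennreal (1 / 64 * min (min 1 (real s / real (n2 * n3)) * b\<^sup>2)
            (1\<^sup>2 * \<sigma>\<^sup>2 * ((real s + real r * real n1 * real n3) / real m)))
     \<le> (SUP X\<in>tclass n1 n2 n3 r b s. risk n1 n2 n3 (real m / real (n1 * n2 * n3)) \<sigma> E X / ennreal (real (n1 * n2 * n3)))"
proof -
  define N where "N = real (n1 * n2 * n3)"
  define \<gamma> where "\<gamma> = real m / N"
  define K where "K = \<sigma>\<^sup>2 / \<gamma>"
  define I where "I = tidx n1 n2 n3"
  have N0: "N > 0" unfolding N_def using n by simp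
  have mN: "real m \<le> N" unfolding N_def using m by linarith
  have g0: "\<gamma> > 0" unfolding \<gamma>_def using N0 m by simp
  have g1: "\<gamma> \<le> 1" unfolding \<gamma>_def using N0 mN by simp
  have K0: "K \<ge> 0" unfolding K_def using g0 by simp
  have Em: "\<And>t. t \<in> I \<Longrightarrow> (\<lambda>\<omega>. E \<omega> t) \<in> borel_measurable (PiM I (\<lambda>_. obs_space))"
    using E unfolding estimators_def I_def by blast
  have risk_eq: "\<And>X. risk n1 n2 n3 \<gamma> \<sigma> E X =
      (\<integral>\<^sup>+\<omega>. ennreal (\<Sum>t\<in>I. (E \<omega> t - X t)\<^sup>2) \<partial>PiM I (\<lambda>t. el \<gamma> \<sigma> (X t)))"
    unfolding I_def by (rule risk_el)
  obtain k D1 where kD: "1 \<le> k" "k \<le> r" "k \<le> n1" "D1 \<subseteq> tidx k n2 n3" "card D1 \<le> s" "s \<le> 2 * card D1"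
      "min (n1 * n2 * n3) (n1 * s) \<le> 2 * card D1 * (n1 div k)"
    using R1_params[of n2 n3 r n1 s] n r by auto
  define L1 where "L1 = n1 div k"
  have L1: "L1 \<ge> 1" unfolding L1_def using kD by (simp add: Suc_le_eq div_greater_zero_iff)
  define U1 where "U1 = {t \<in> tidx n1 n2 n3. fst t < k * (n1 div k) \<and> (fst t div (n1 div k), fst (snd t), snd (snd t)) \<in> D1}"
  define own1 where "own1 = (\<lambda>t::idx. (fst t div (n1 div k), fst (snd t), snd (snd t)))"
  have fD1: "finite D1" using kD(4) by (rule finite_subset) simp
  obtain X1 where X1: "X1 \<in> tclass n1 n2 n3 r b s"
    "ennreal (real (card D1) * min (real L1 * b\<^sup>2) K / 16) \<le> risk n1 n2 n3 \<gamma> \<sigma> E X1"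
  proof -
    have "\<exists>X\<in>tclass n1 n2 n3 r b s. ennreal (real (card D1) * min (real L1 * b\<^sup>2) (\<sigma>\<^sup>2 / \<gamma>) / 16) \<le>
       (\<integral>\<^sup>+\<omega>. ennreal (\<Sum>t\<in>I. (E \<omega> t - X t)\<^sup>2) \<partial>PiM I (\<lambda>t. el \<gamma> \<sigma> (X t)))"
    proof (rule assouad_b[OF g0 g1 s b _ _ fD1 _ _ L1 Em])
      show "finite I" unfolding I_def by simp
      show "U1 \<subseteq> I" unfolding U1_def I_def by auto
      show "own1 ` U1 \<subseteq> D1" unfolding U1_def own1_def by auto
      show "card {t\<in>U1. own1 t = a} = L1" if "a \<in> D1" for a
        unfolding U1_def own1_def L1_def by (rule R1_blocks[OF kD(1) kD(3) kD(4) that])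
      show "Xv U1 own1 \<delta> v \<in> tclass n1 n2 n3 r b s" if "0 < \<delta>" "\<delta> \<le> b" for \<delta> v
        unfolding U1_def own1_def by (rule R1_in_class[OF kD(1) kD(2) kD(3) kD(4) kD(5) that])
    qed
    then show ?thesis using that unfolding K_def risk_eq by blast
  qed
  define g where "g = min n2 s div r"
  have gp: "1 \<le> g" "r * g \<le> n2" "r * g \<le> s" "min n2 s \<le> 2 * (r * g)"
    using R2_params[of r n2 s] r unfolding g_def by auto
  define U2 where "U2 = {t \<in> tidx n1 n2 n3. fst (snd t) < r * g}"
  define own2 where "own2 = (\<lambda>t::idx. (fst t, fst (snd t) div g, snd (snd t)))"
  define D2 where "D2 = tidx n1 r n3"
  obtain X2 where X2: "X2 \<in> tclass n1 n2 n3 r b s"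
    "ennreal (real (card D2) * min (real g * b\<^sup>2) K / 16) \<le> risk n1 n2 n3 \<gamma> \<sigma> E X2"
  proof -
    have "\<exists>X\<in>tclass n1 n2 n3 r b s. ennreal (real (card D2) * min (real g * b\<^sup>2) (\<sigma>\<^sup>2 / \<gamma>) / 16) \<le>
       (\<integral>\<^sup>+\<omega>. ennreal (\<Sum>t\<in>I. (E \<omega> t - X t)\<^sup>2) \<partial>PiM I (\<lambda>t. el \<gamma> \<sigma> (X t)))"
    proof (rule assouad_b[OF g0 g1 s b _ _ _ _ _ gp(1) Em])
      show "finite I" unfolding I_def by simp
      show "finite D2" unfolding D2_def by simp
      show "U2 \<subseteq> I" unfolding U2_def I_def by auto
      show "own2 ` U2 \<subseteq> D2" unfolding U2_def own2_def D2_def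
      proof
        fix x assume "x \<in> (\<lambda>t::idx. (fst t, fst (snd t) div g, snd (snd t))) ` {t \<in> tidx n1 n2 n3. fst (snd t) < r * g}"
        then obtain i j q where x: "x = (i, j div g, q)" "i < n1" "j < r * g" "q < n3" by auto
        then have "j div g < r" by (metis less_mult_imp_div_less)
        then show "x \<in> tidx n1 r n3" using x by simp
      qed
      show "card {t\<in>U2. own2 t = a} = g" if "a \<in> D2" for a
        using that unfolding U2_def own2_def D2_def by (intro R2_blocks[OF gp(1) gp(2)])
      show "Xv U2 own2 \<delta> v \<in> tclass n1 n2 n3 r b s" if "0 < \<delta>" "\<delta> \<le> b" for \<delta> v
        unfolding U2_def own2_def by (rule R2_in_class[OF gp(1) gp(2) gp(3) that])
    qed
    then show ?thesis using that unfolding K_def risk_eq by blast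
  qed
  define P where "P = real r * real n1 * real n3"
  define a where "a = real (min (n1 * n2 * n3) (n1 * s)) * b\<^sup>2"
  define R1 where "R1 = real (card D1) * min (real L1 * b\<^sup>2) K"
  define R2 where "R2 = real (card D2) * min (real g * b\<^sup>2) K"
  have cD2: "real (card D2) = P" unfolding D2_def P_def by (simp add: card_tidx)
  have Tle: "min a (real s * K + P * K) / 4 \<le> max R1 R2"
  proof -
    have R1e: "R1 = min (real (card D1) * real L1 * b\<^sup>2) (real (card D1) * K)"
      unfolding R1_def by (simp add: min_mult_distrib_left mult.assoc)
    have R2e: "R2 = min (real (card D2) * real g * b\<^sup>2) (real (card D2) * K)"
      unfolding R2_def by (simp add: min_mult_distrib_left mult.assoc)
    have x1: "real (card D1) * real L1 * b\<^sup>2 \<ge> a / 2"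
    proof -
      have "real (min (n1 * n2 * n3) (n1 * s)) \<le> 2 * (real (card D1) * real L1)"
        using kD(7) unfolding L1_def by (simp add: of_nat_mult[symmetric] del: of_nat_mult)
      then have "real (min (n1 * n2 * n3) (n1 * s)) * b\<^sup>2 \<le> 2 * (real (card D1) * real L1) * b\<^sup>2"
        by (rule mult_right_mono) simp
      then show ?thesis unfolding a_def by simp
    qed
    have y1: "real (card D1) * K \<ge> real s * K / 2"
    proof -
      have "real s \<le> 2 * real (card D1)" using kD(6) by linarith
      then have "real s * K \<le> 2 * real (card D1) * K" using K0 by (rule mult_right_mono)
      then show ?thesis by simp
    qed
    have x2: "real (card D2) * real g * b\<^sup>2 \<ge> a / 2"
    proof -
      have "min (n1 * n2 * n3) (n1 * s) \<le> n1 * n3 * min n2 s"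
      proof (cases "n2 \<le> s")
        case True then show ?thesis by (simp add: mult_ac min_def)
      next
        case False
        have "min (n1 * n2 * n3) (n1 * s) \<le> n1 * s" by simp
        also have "n1 * s \<le> n1 * n3 * s" using n by simp
        also have "n1 * n3 * s = n1 * n3 * min n2 s" using False by simp
        finally show ?thesis .
      qed
      also have "\<dots> \<le> n1 * n3 * (2 * (r * g))" using gp(4) by simp
      finally have "real (min (n1 * n2 * n3) (n1 * s)) \<le> 2 * (real (card D2) * real g)"
        unfolding cD2 P_def by (simp add: of_nat_mult[symmetric] mult_ac del: of_nat_mult)
      then have "real (min (n1 * n2 * n3) (n1 * s)) * b\<^sup>2 \<le> 2 * (real (card D2) * real g) * b\<^sup>2"
        by (rule mult_right_mono) simp
      then show ?thesis unfolding a_def by simp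
    qed
    have y2: "real (card D2) * K \<ge> P * K / 2" using cD2 K0 by (simp add: P_def)
    show ?thesis unfolding R1e R2e
      by (rule comb_ineq[OF x1 y1 x2 y2]) (use K0 in \<open>auto simp: a_def P_def\<close>)
  qed
  define T where "T = 1 / 64 * min (min 1 (real s / real (n2 * n3)) * b\<^sup>2)
            (1\<^sup>2 * \<sigma>\<^sup>2 * ((real s + real r * real n1 * real n3) / real m))"
  have TN: "T * N = min a (real s * K + P * K) / 64"
  proof -
    have n23: "real (n2 * n3) > 0" using n by simp
    have "N * min 1 (real s / real (n2 * n3)) = min N (real (n1 * s))"
      using N0 n23 by (simp add: min_mult_distrib_left N_def)
    moreover have "real (min (n1 * n2 * n3) (n1 * s)) = min N (real (n1 * s))"
      unfolding N_def by (simp only: min_def of_nat_le_iff) simp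
    ultimately have e1: "N * (min 1 (real s / real (n2 * n3)) * b\<^sup>2) = a"
      unfolding a_def by (simp only: mult.assoc[symmetric])
    have e2: "N * (1\<^sup>2 * \<sigma>\<^sup>2 * ((real s + real r * real n1 * real n3) / real m)) = real s * K + P * K"
      unfolding K_def \<gamma>_def P_def using N0 m by (simp add: field_simps)
    have "T * N = (N * min (min 1 (real s / real (n2 * n3)) * b\<^sup>2)
            (1\<^sup>2 * \<sigma>\<^sup>2 * ((real s + real r * real n1 * real n3) / real m))) / 64"
      unfolding T_def by simp
    also have "N * min (min 1 (real s / real (n2 * n3)) * b\<^sup>2)
            (1\<^sup>2 * \<sigma>\<^sup>2 * ((real s + real r * real n1 * real n3) / real m)) =
         min (N * (min 1 (real s / real (n2 * n3)) * b\<^sup>2))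
            (N * (1\<^sup>2 * \<sigma>\<^sup>2 * ((real s + real r * real n1 * real n3) / real m)))"
      using N0 by (simp only: min_mult_distrib_left) simp
    finally show ?thesis unfolding e1 e2 .
  qed
  have T0: "T \<le> max R1 R2 / 16 / N"
    using Tle TN N0 by (simp add: field_simps)
  have R0: "R1 \<ge> 0" "R2 \<ge> 0" unfolding R1_def R2_def using K0 by auto
  show ?thesis
  proof (cases "R2 \<le> R1")
    case True
    have "ennreal T \<le> ennreal (R1 / 16 / N)" using T0 True by (intro ennreal_leI) simp
    also have "\<dots> = ennreal (R1 / 16) / ennreal N" using R0 N0 by (simp add: divide_ennreal)
    also have "\<dots> \<le> risk n1 n2 n3 \<gamma> \<sigma> E X1 / ennreal N"
      by (rule divide_right_mono_ennreal) (use X1(2) in \<open>simp add: R1_def\<close>)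
    finally show ?thesis unfolding T_def N_def \<gamma>_def using X1(1) by (intro SUP_upper2) auto
  next
    case False
    have "ennreal T \<le> ennreal (R2 / 16 / N)" using T0 False by (intro ennreal_leI) simp
    also have "\<dots> = ennreal (R2 / 16) / ennreal N" using R0 N0 by (simp add: divide_ennreal)
    also have "\<dots> \<le> risk n1 n2 n3 \<gamma> \<sigma> E X2 / ennreal N"
      by (rule divide_right_mono_ennreal) (use X2(2) in \<open>simp add: R2_def\<close>)
    finally show ?thesis unfolding T_def N_def \<gamma>_def using X2(1) by (intro SUP_upper2) auto
  qed
qed

theorem proposition4:
  "\<exists>C \<beta>c :: real. C > 0 \<and> \<beta>c > 0 \<and>
    (\<forall>(n1::nat) (n2::nat) (n3::nat) (b::real) (\<sigma>::real) (r::nat) (s::nat) (m::nat).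
      n1 \<ge> 2 \<longrightarrow> n2 \<ge> 2 \<longrightarrow> n3 \<ge> 2 \<longrightarrow> b > 0 \<longrightarrow> \<sigma> > 0 \<longrightarrow>
      r \<le> min n1 n2 \<longrightarrow> r \<le> s \<longrightarrow> s \<le> r * n2 * n3 \<longrightarrow> 1 \<le> m \<longrightarrow> m \<le> n1 * n2 * n3 \<longrightarrow>
      (let \<gamma> = real m / real (n1 * n2 * n3);
           \<Delta> = min 1 (real s / real (n2 * n3))
       in (INF E\<in>estimators n1 n2 n3. SUP X\<in>tclass n1 n2 n3 r b s.
             risk n1 n2 n3 \<gamma> \<sigma> E X / ennreal (real (n1 * n2 * n3)))
          \<ge> ennreal (C * min (\<Delta> * b\<^sup>2)
                 (\<beta>c\<^sup>2 * \<sigma>\<^sup>2 * ((real s + real r * real n1 * real n3) / real m)))))"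
proof (rule exI[of _ "1 / 64"], rule exI[of _ 1], intro conjI allI impI)
  fix n1 n2 n3 :: nat and b \<sigma> :: real and r s m :: nat
  assume n: "n1 \<ge> 2" "n2 \<ge> 2" "n3 \<ge> 2" and b: "b > 0" and s: "\<sigma> > 0"
    and r: "r \<le> min n1 n2" "r \<le> s" "s \<le> r * n2 * n3" and m: "1 \<le> m" "m \<le> n1 * n2 * n3"
  show "let \<gamma> = real m / real (n1 * n2 * n3);
           \<Delta> = min 1 (real s / real (n2 * n3))
       in (INF E\<in>estimators n1 n2 n3. SUP X\<in>tclass n1 n2 n3 r b s.
             risk n1 n2 n3 \<gamma> \<sigma> E X / ennreal (real (n1 * n2 * n3)))
          \<ge> ennreal (1 / 64 * min (\<Delta> * b\<^sup>2)
                 (1\<^sup>2 * \<sigma>\<^sup>2 * ((real s + real r * real n1 * real n3) / real m)))"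
  proof (cases "r = 0")
    case True
    then have "s = 0" using r by simp
    then show ?thesis using True by (simp add: Let_def)
  next
    case False
    then have r1: "1 \<le> r" by simp
    show ?thesis unfolding Let_def
    proof (rule INF_greatest)
      fix E assume "E \<in> estimators n1 n2 n3"
      then show "ennreal (1 / 64 * min (min 1 (real s / real (n2 * n3)) * b\<^sup>2)
                 (1\<^sup>2 * \<sigma>\<^sup>2 * ((real s + real r * real n1 * real n3) / real m)))
          \<le> (SUP X\<in>tclass n1 n2 n3 r b s. risk n1 n2 n3 (real m / real (n1 * n2 * n3)) \<sigma> E X / ennreal (real (n1 * n2 * n3)))"
        using r r1 by (intro main_pos[OF n b s r1 _ _ r(2) r(3) m]) auto
    qed
  qed
qed simp_all


end
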